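(* Let $\mathcal{C}$ be a prevariety over a finite alphabet $A$. Then $\mathit{SF}(\mathcal{C}) = \mathrm{FO}(\mathbb{I}_{\mathcal{C}})$.
   Context: Fix a finite alphabet $A$. A prevariety is a class of regular languages over $A$ containing $\emptyset$ and $A^*$, closed under union, intersection, complement, and under the quotients $u^{-1}L=\{w\mid uw\in L\}$ and $Lu^{-1}=\{w\mid wu\in L\}$. $\mathit{SF}(\mathcal{C})$ is the least class containing $\mathcal{C}$ and all $\{a\}$ ($a\in A$), closed under union, complement and concatenation. A word $w=a_1\cdots a_n$ is viewed as a structure with domain $\{0,1,\dots,n+1\}$; positions $1\le i\le n$ carry label $a_i$, while $0$ and $n+1$ are unlabeled. For positions $i<j$, $w(i,j)=a_{i+1}\cdots a_{j-1}$. First-order formulas over a set $\mathbb{S}$ of predicates use first-order variables ranging over positions, two constants $\mathit{min}$ and $\mathit{max}$ interpreted as $0$ and $n+1$, atomic formulas $x=y$ and $P(x_1,\dots,x_k)$ for $P\in\mathbb{S}$ (arguments being variables or constants), and are closed under disjunction, negation and existential quantification, with the usual semantics. The label predicates are unary predicates $a(x)$ for $a\in A$, holding iff position $x$ is labeled $a$ (so never at $0$ or $n+1$). For a set $\mathbb{S}$ of predicates, $\mathrm{FO}(\mathbb{S})$ is the class of languages $\{w\mid w\models\varphi\}$ defined by first-order sentences $\varphi$ over the label predicates together with $\mathbb{S}$. $\mathbb{I}_{\mathcal{C}}$ is the set containing, for each $L\in\mathcal{C}$, a binary predicate $I_L$ with $I_L(i,j)$ holding in $w$ iff $i<j$ and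 $w(i,j)\in L$. *)

theory Defs
  imports Main
begin

definition regular :: "'a list set \<Rightarrow> bool" where
  "regular L \<longleftrightarrow>
     (\<exists>(Q::nat set) q0 \<delta> F. finite Q \<and> q0 \<in> Q \<and> (\<forall>q\<in>Q. \<forall>a. \<delta> q a \<in> Q) \<and>
        L = {w. fold (\<lambda>a q. \<delta> q a) w q0 \<in> F})"

definition lquot :: "'a list \<Rightarrow> 'a list set \<Rightarrow> 'a list set" where
  "lquot u L = {w. u @ w \<in> L}"

definition rquot :: "'a list set \<Rightarrow> 'a list \<Rightarrow> 'a list set" where
  "rquot L u = {w. w @ u \<in> L}"

definition prevariety :: "'a list set set \<Rightarrow> bool" where
  "prevariety C \<longleftrightarrow>
     (\<forall>L\<in>C. regular L) \<and> {} \<in> C \<and> UNIV \<in> C \<and>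
     (\<forall>K\<in>C. \<forall>L\<in>C. K \<union> L \<in> C) \<and>
     (\<forall>K\<in>C. \<forall>L\<in>C. K \<inter> L \<in> C) \<and>
     (\<forall>L\<in>C. - L \<in> C) \<and>
     (\<forall>L\<in>C. \<forall>u. lquot u L \<in> C) \<and>
     (\<forall>L\<in>C. \<forall>u. rquot L u \<in> C)"

definition conc :: "'a list set \<Rightarrow> 'a list set \<Rightarrow> 'a list set" where
  "conc K L = {u @ v | u v. u \<in> K \<and> v \<in> L}"

inductive_set SF :: "'a list set set \<Rightarrow> 'a list set set" for C where
  base: "L \<in> C \<Longrightarrow> L \<in> SF C"
| letter: "{[a]} \<in> SF C"
| union: "K \<in> SF C \<Longrightarrow> L \<in> SF C \<Longrightarrow> K \<union> L \<in> SF C"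
| compl: "L \<in> SF C \<Longrightarrow> - L \<in> SF C"
| concat: "K \<in> SF C \<Longrightarrow> L \<in> SF C \<Longrightarrow> conc K L \<in> SF C"

datatype fo_term = FVar nat | FMin | FMax

datatype 'a fo =
    FEq fo_term fo_term
  | FLabel 'a fo_term
  | FInf "'a list set" fo_term fo_term
  | FOr "'a fo" "'a fo"
  | FNeg "'a fo"
  | FEx nat "'a fo"

fun tvars :: "fo_term \<Rightarrow> nat set" where
  "tvars (FVar x) = {x}"
| "tvars FMin = {}"
| "tvars FMax = {}"

fun free_vars :: "'a fo \<Rightarrow> nat set" where
  "free_vars (FEq s t) = tvars s \<union> tvars t"
| "free_vars (FLabel a t) = tvars t"
| "free_vars (FInf L s t) = tvars s \<union> tvars t"
| "free_vars (FOr \<phi> \<psi>) = free_vars \<phi> \<union> free_vars \<psi>"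
| "free_vars (FNeg \<phi>) = free_vars \<phi>"
| "free_vars (FEx x \<phi>) = free_vars \<phi> - {x}"

fun preds :: "'a fo \<Rightarrow> 'a list set set" where
  "preds (FEq s t) = {}"
| "preds (FLabel a t) = {}"
| "preds (FInf L s t) = {L}"
| "preds (FOr \<phi> \<psi>) = preds \<phi> \<union> preds \<psi>"
| "preds (FNeg \<phi>) = preds \<phi>"
| "preds (FEx x \<phi>) = preds \<phi>"

text \<open>Positions of w are 0..length w + 1; min = 0, max = length w + 1.\<close>
fun tval :: "'a list \<Rightarrow> (nat \<Rightarrow> nat) \<Rightarrow> fo_term \<Rightarrow> nat" where
  "tval w \<sigma> (FVar x) = \<sigma> x"
| "tval w \<sigma> FMin = 0"
| "tval w \<sigma> FMax = length w + 1"

text \<open>The infix w(i,j) = a_(i+1) ... a_(j-1) for i < j.\<close>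
definition infix_between :: "'a list \<Rightarrow> nat \<Rightarrow> nat \<Rightarrow> 'a list" where
  "infix_between w i j = take (j - i - 1) (drop i w)"

fun sat :: "'a list \<Rightarrow> (nat \<Rightarrow> nat) \<Rightarrow> 'a fo \<Rightarrow> bool" where
  "sat w \<sigma> (FEq s t) \<longleftrightarrow> tval w \<sigma> s = tval w \<sigma> t"
| "sat w \<sigma> (FLabel a t) \<longleftrightarrow>
     (let i = tval w \<sigma> t in 1 \<le> i \<and> i \<le> length w \<and> w ! (i - 1) = a)"
| "sat w \<sigma> (FInf L s t) \<longleftrightarrow>
     (let i = tval w \<sigma> s; j = tval w \<sigma> t in i < j \<and> infix_between w i j \<in> L)"
| "sat w \<sigma> (FOr \<phi> \<psi>) \<longleftrightarrow> sat w \<sigma> \<phi> \<or> sat w \<sigma> \<psi>"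
| "sat w \<sigma> (FNeg \<phi>) \<longleftrightarrow> \<not> sat w \<sigma> \<phi>"
| "sat w \<sigma> (FEx x \<phi>) \<longleftrightarrow> (\<exists>i \<le> length w + 1. sat w (\<sigma>(x := i)) \<phi>)"

text \<open>FO(I_C): languages defined by sentences using label predicates and predicates I_L with L in C.
  For a sentence the assignment is irrelevant; we use the constant assignment 0.\<close>
definition FO_I :: "'a list set set \<Rightarrow> 'a list set set" where
  "FO_I C = {{w. sat w (\<lambda>_. 0) \<phi>} | \<phi>. free_vars \<phi> = {} \<and> preds \<phi> \<subseteq> C}"

end

theory Submission
  imports Defs
begin


lemma fold_in_Q: "q \<in> Q \<Longrightarrow> \<forall>q\<in>Q. \<forall>a. \<delta> q a \<in> Q \<Longrightarrow> fold (\<lambda>a q. \<delta> q a) w q \<in> Q"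
  by (induction w arbitrary: q) auto

lemma regular_lquot_finite: "regular L \<Longrightarrow> finite (range (\<lambda>u. lquot u L))"
proof -
  assume "regular L"
  then obtain Q :: "nat set" and q0 \<delta> F where fin: "finite Q" and q0: "q0 \<in> Q" and cl: "\<forall>q\<in>Q. \<forall>a. \<delta> q a \<in> Q"
    and L: "L = {w. fold (\<lambda>a q. \<delta> q a) w q0 \<in> F}" unfolding regular_def by blast
  have "range (\<lambda>u. lquot u L) \<subseteq> (\<lambda>q. {w. fold (\<lambda>a q. \<delta> q a) w q \<in> F}) ` Q"
  proof
    fix K assume "K \<in> range (\<lambda>u. lquot u L)"
    then obtain u where "K = lquot u L" by blast
    hence K: "K = {w. fold (\<lambda>a q. \<delta> q a) w (fold (\<lambda>a q. \<delta> q a) u q0) \<in> F}"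
      by (simp add: lquot_def L)
    have "fold (\<lambda>a q. \<delta> q a) u q0 \<in> Q" using fold_in_Q[OF q0 cl] .
    from this K show "K \<in> (\<lambda>q. {w. fold (\<lambda>a q. \<delta> q a) w q \<in> F}) ` Q" by (rule rev_image_eqI)
  qed
  thus ?thesis using fin by (rule finite_subset[OF _ finite_imageI])
qed

lemma regular_rquot_finite: "regular L \<Longrightarrow> finite (range (\<lambda>u. rquot L u))"
proof -
  assume "regular L"
  then obtain Q :: "nat set" and q0 \<delta> F where fin: "finite Q" and q0: "q0 \<in> Q" and cl: "\<forall>q\<in>Q. \<forall>a. \<delta> q a \<in> Q"
    and L: "L = {w. fold (\<lambda>a q. \<delta> q a) w q0 \<in> F}" unfolding regular_def by blast
  have "range (\<lambda>u. rquot L u) \<subseteq> (\<lambda>S. {w. fold (\<lambda>a q. \<delta> q a) w q0 \<in> S}) ` Pow Q"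
  proof
    fix K assume "K \<in> range (\<lambda>u. rquot L u)"
    then obtain u where "K = rquot L u" by blast
    hence "K = {w. fold (\<lambda>a q. \<delta> q a) w q0 \<in> {q \<in> Q. fold (\<lambda>a q. \<delta> q a) u q \<in> F}}"
      using fold_in_Q[OF q0 cl] by (auto simp add: rquot_def L)
    moreover have "{q \<in> Q. fold (\<lambda>a q. \<delta> q a) u q \<in> F} \<in> Pow Q" by blast
    ultimately show "K \<in> (\<lambda>S. {w. fold (\<lambda>a q. \<delta> q a) w q0 \<in> S}) ` Pow Q" by (intro rev_image_eqI)
  qed
  thus ?thesis using fin by (meson finite_Pow_iff finite_imageI finite_subset)
qed

lemma concI: "x \<in> K \<Longrightarrow> y \<in> L \<Longrightarrow> w = x @ y \<Longrightarrow> w \<in> conc K L"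
  by (auto simp: conc_def)

lemma concE: "w \<in> conc K L \<Longrightarrow> (\<And>x y. x \<in> K \<Longrightarrow> y \<in> L \<Longrightarrow> w = x @ y \<Longrightarrow> P) \<Longrightarrow> P"
  by (auto simp: conc_def)

lemma lquot_conc: "lquot u (conc K L) = conc (lquot u K) L \<union> (\<Union>i\<in>{i. i \<le> length u \<and> take i u \<in> K}. lquot (drop i u) L)"
proof (intro set_eqI iffI)
  fix w assume "w \<in> lquot u (conc K L)"
  then obtain x y where xy: "u @ w = x @ y" "x \<in> K" "y \<in> L" by (auto simp: lquot_def conc_def)
  show "w \<in> conc (lquot u K) L \<union> (\<Union>i\<in>{i. i \<le> length u \<and> take i u \<in> K}. lquot (drop i u) L)"
  proof -
    from xy(1) obtain us where "(u = x @ us \<and> us @ w = y) \<or> (u @ us = x \<and> w = us @ y)"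
      by (auto simp: append_eq_append_conv2)
    thus ?thesis
    proof
      assume h: "u = x @ us \<and> us @ w = y"
      hence "take (length x) u = x" "drop (length x) u @ w = y" "length x \<le> length u" by auto
      thus ?thesis using xy by (auto simp: lquot_def)
    next
      assume h: "u @ us = x \<and> w = us @ y"
      thus ?thesis using xy by (auto simp: lquot_def intro!: concI[of us _ y])
    qed
  qed
next
  fix w assume "w \<in> conc (lquot u K) L \<union> (\<Union>i\<in>{i. i \<le> length u \<and> take i u \<in> K}. lquot (drop i u) L)"
  thus "w \<in> lquot u (conc K L)"
  proof
    assume "w \<in> conc (lquot u K) L"
    then obtain x y where "u @ x \<in> K" "y \<in> L" "w = x @ y" by (auto elim!: concE simp: lquot_def)
    hence "u @ w \<in> conc K L" by (intro concI[of "u@x" _ y]) auto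
    thus ?thesis by (simp add: lquot_def)
  next
    assume "w \<in> (\<Union>i\<in>{i. i \<le> length u \<and> take i u \<in> K}. lquot (drop i u) L)"
    then obtain i where "take i u \<in> K" "drop i u @ w \<in> L" by (auto simp: lquot_def)
    hence "u @ w \<in> conc K L" by (intro concI[of "take i u" _ "drop i u @ w"]) auto
    thus ?thesis by (simp add: lquot_def)
  qed
qed

lemma rquot_conc: "rquot (conc K L) u = conc K (rquot L u) \<union> (\<Union>i\<in>{i. i \<le> length u \<and> drop i u \<in> L}. rquot K (take i u))"
proof (intro set_eqI iffI)
  fix w assume "w \<in> rquot (conc K L) u"
  then obtain x y where xy: "w @ u = x @ y" "x \<in> K" "y \<in> L" by (auto simp: rquot_def conc_def)
  show "w \<in> conc K (rquot L u) \<union> (\<Union>i\<in>{i. i \<le> length u \<and> drop i u \<in> L}. rquot K (take i u))"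
  proof -
    from xy(1) obtain us where "(w = x @ us \<and> us @ u = y) \<or> (w @ us = x \<and> u = us @ y)"
      by (auto simp: append_eq_append_conv2)
    thus ?thesis
    proof
      assume h: "w = x @ us \<and> us @ u = y"
      thus ?thesis using xy by (auto simp: rquot_def intro!: concI[of x _ us])
    next
      assume h: "w @ us = x \<and> u = us @ y"
      hence "take (length us) u = us" "drop (length us) u = y" "length us \<le> length u" by auto
      hence "w \<in> rquot K (take (length us) u)" "length us \<in> {i. i \<le> length u \<and> drop i u \<in> L}"
        using xy h by (auto simp: rquot_def)
      thus ?thesis by blast
    qed
  qed
next
  fix w assume "w \<in> conc K (rquot L u) \<union> (\<Union>i\<in>{i. i \<le> length u \<and> drop i u \<in> L}. rquot K (take i u))"
  thus "w \<in> rquot (conc K L) u"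
  proof
    assume "w \<in> conc K (rquot L u)"
    then obtain x y where "x \<in> K" "y @ u \<in> L" "w = x @ y" by (auto elim!: concE simp: rquot_def)
    hence "w @ u \<in> conc K L" by (intro concI[of x _ "y@u"]) auto
    thus ?thesis by (simp add: rquot_def)
  next
    assume "w \<in> (\<Union>i\<in>{i. i \<le> length u \<and> drop i u \<in> L}. rquot K (take i u))"
    then obtain i where "drop i u \<in> L" "w @ take i u \<in> K" by (auto simp: rquot_def)
    hence "w @ u \<in> conc K L" by (intro concI[of "w @ take i u" _ "drop i u"]) auto
    thus ?thesis by (simp add: rquot_def)
  qed
qed


context fixes C :: "('a::finite) list set set" assumes pv: "prevariety C"
begin

lemma SF_empty: "{} \<in> SF C" using pv by (auto simp: prevariety_def intro: SF.base)
lemma SF_UNIV: "UNIV \<in> SF C" using pv by (auto simp: prevariety_def intro: SF.base)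
lemma SF_inter: "K \<in> SF C \<Longrightarrow> L \<in> SF C \<Longrightarrow> K \<inter> L \<in> SF C"
proof -
  assume "K \<in> SF C" "L \<in> SF C"
  hence "- (- K \<union> - L) \<in> SF C" by (intro SF.compl SF.union)
  thus ?thesis by simp
qed

lemma SF_Union: "finite S \<Longrightarrow> S \<subseteq> SF C \<Longrightarrow> \<Union>S \<in> SF C"
  by (induction S rule: finite_induct) (auto intro: SF_empty SF.union)

lemma SF_Inter: "finite S \<Longrightarrow> S \<subseteq> SF C \<Longrightarrow> \<Inter>S \<in> SF C"
  by (induction S rule: finite_induct) (auto intro: SF_UNIV SF_inter)

lemma SF_eps: "{[]} \<in> SF C"
proof -
  have "(\<Union>a\<in>UNIV. conc {[a]} UNIV) \<in> SF C"
    by (rule SF_Union) (auto intro: SF.concat SF.letter SF_UNIV)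
  hence "- (\<Union>a\<in>UNIV. conc {[a]} UNIV) \<in> SF C" by (rule SF.compl)
  moreover have "- (\<Union>a\<in>UNIV. conc {[a]} (UNIV :: 'a list set)) = {[]}"
  proof (intro set_eqI iffI)
    fix w :: "'a list" assume "w \<in> - (\<Union>a\<in>UNIV. conc {[a]} UNIV)"
    thus "w \<in> {[]}" by (cases w) (auto simp: conc_def)
  qed (auto simp: conc_def)
  ultimately show ?thesis by simp
qed

lemma lquot_letter: "lquot u {[a]} = (if u = [] then {[a]} else if u = [a] then {[]} else {})"
  by (auto simp: lquot_def append_eq_Cons_conv)

lemma rquot_letter: "rquot {[a]} u = (if u = [] then {[a]} else if u = [a] then {[]} else {})"
  by (auto simp: rquot_def append_eq_Cons_conv)

lemma SF_quot: "L \<in> SF C \<Longrightarrow> (\<forall>u. lquot u L \<in> SF C) \<and> (\<forall>u. rquot L u \<in> SF C) \<and>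
   finite (range (\<lambda>u. lquot u L)) \<and> finite (range (\<lambda>u. rquot L u))"
proof (induction rule: SF.induct)
  case (base L)
  thus ?case using pv by (auto simp: prevariety_def intro: SF.base regular_lquot_finite regular_rquot_finite)
next
  case (letter a)
  have "range (\<lambda>u. lquot u {[a]}) \<subseteq> {{[a]}, {[]}, {}}" "range (\<lambda>u. rquot {[a]} u) \<subseteq> {{[a]}, {[]}, {}}"
    by (auto simp: lquot_letter rquot_letter)
  hence "finite (range (\<lambda>u. lquot u {[a]}))" "finite (range (\<lambda>u. rquot {[a]} u))"
    by (auto intro: finite_subset)
  thus ?case by (auto simp: lquot_letter rquot_letter intro: SF_eps SF_empty SF.letter)
next
  case (union K L)
  have e1: "lquot u (K \<union> L) = lquot u K \<union> lquot u L" for u by (auto simp: lquot_def)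
  have e2: "rquot (K \<union> L) u = rquot K u \<union> rquot L u" for u by (auto simp: rquot_def)
  have s1: "range (\<lambda>u. lquot u (K \<union> L)) \<subseteq> (\<lambda>(X,Y). X \<union> Y) ` (range (\<lambda>u. lquot u K) \<times> range (\<lambda>u. lquot u L))"
    and s2: "range (\<lambda>u. rquot (K \<union> L) u) \<subseteq> (\<lambda>(X,Y). X \<union> Y) ` (range (\<lambda>u. rquot K u) \<times> range (\<lambda>u. rquot L u))"
    by (auto simp: e1 e2)
  have "finite (range (\<lambda>u. lquot u K) \<times> range (\<lambda>u. lquot u L))"
    "finite (range (\<lambda>u. rquot K u) \<times> range (\<lambda>u. rquot L u))" using union.IH by auto
  hence "finite (range (\<lambda>u. lquot u (K \<union> L)))" "finite (range (\<lambda>u. rquot (K \<union> L) u))"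
    using finite_subset[OF s1 finite_imageI] finite_subset[OF s2 finite_imageI] by blast+
  thus ?case using union.IH by (auto simp: e1 e2 intro: SF.union)
next
  case (compl L)
  have e1: "lquot u (- L) = - lquot u L" for u by (auto simp: lquot_def)
  have e2: "rquot (- L) u = - rquot L u" for u by (auto simp: rquot_def)
  have "range (\<lambda>u. lquot u (- L)) \<subseteq> uminus ` range (\<lambda>u. lquot u L)"
    "range (\<lambda>u. rquot (- L) u) \<subseteq> uminus ` range (\<lambda>u. rquot L u)"
    by (auto simp: e1 e2)
  hence "finite (range (\<lambda>u. lquot u (- L)))" "finite (range (\<lambda>u. rquot (- L) u))"
    using compl.IH finite_subset finite_imageI by metis+
  thus ?case using compl.IH by (auto simp: e1 e2 intro: SF.compl)
next
  case (concat K L)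
  have fin1: "finite {i. i \<le> length u \<and> P i}" for u and P :: "nat \<Rightarrow> bool"
    by (rule finite_subset[of _ "{..length u}"]) auto
  have m1: "lquot u (conc K L) \<in> SF C" for u
    unfolding lquot_conc using concat.IH concat.hyps
    by (intro SF.union SF.concat SF_Union) (auto intro: fin1)
  have m2: "rquot (conc K L) u \<in> SF C" for u
    unfolding rquot_conc using concat.IH concat.hyps
    by (intro SF.union SF.concat SF_Union) (auto intro: fin1)
  have "range (\<lambda>u. lquot u (conc K L)) \<subseteq> (\<lambda>(X,S). conc X L \<union> \<Union>S) ` (range (\<lambda>u. lquot u K) \<times> Pow (range (\<lambda>u. lquot u L)))"
  proof
    fix Z assume "Z \<in> range (\<lambda>u. lquot u (conc K L))"
    then obtain u where Z: "Z = lquot u (conc K L)" by blast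
    let ?S = "(\<lambda>i. lquot (drop i u) L) ` {i. i \<le> length u \<and> take i u \<in> K}"
    have "Z = (\<lambda>(X,S). conc X L \<union> \<Union>S) (lquot u K, ?S)" unfolding Z lquot_conc by simp
    moreover have "(lquot u K, ?S) \<in> range (\<lambda>u. lquot u K) \<times> Pow (range (\<lambda>u. lquot u L))" by blast
    ultimately show "Z \<in> (\<lambda>(X,S). conc X L \<union> \<Union>S) ` (range (\<lambda>u. lquot u K) \<times> Pow (range (\<lambda>u. lquot u L)))"
      by (rule rev_image_eqI[rotated])
  qed
  moreover have "finite (range (\<lambda>u. lquot u K) \<times> Pow (range (\<lambda>u. lquot u L)))" using concat.IH by auto
  ultimately have f1: "finite (range (\<lambda>u. lquot u (conc K L)))"
    using finite_subset finite_imageI by metis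
  have "range (\<lambda>u. rquot (conc K L) u) \<subseteq> (\<lambda>(X,S). conc K X \<union> \<Union>S) ` (range (\<lambda>u. rquot L u) \<times> Pow (range (\<lambda>u. rquot K u)))"
  proof
    fix Z assume "Z \<in> range (\<lambda>u. rquot (conc K L) u)"
    then obtain u where Z: "Z = rquot (conc K L) u" by blast
    let ?S = "(\<lambda>i. rquot K (take i u)) ` {i. i \<le> length u \<and> drop i u \<in> L}"
    have "Z = (\<lambda>(X,S). conc K X \<union> \<Union>S) (rquot L u, ?S)" unfolding Z rquot_conc by simp
    moreover have "(rquot L u, ?S) \<in> range (\<lambda>u. rquot L u) \<times> Pow (range (\<lambda>u. rquot K u))" by blast
    ultimately show "Z \<in> (\<lambda>(X,S). conc K X \<union> \<Union>S) ` (range (\<lambda>u. rquot L u) \<times> Pow (range (\<lambda>u. rquot K u)))"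
      by (rule rev_image_eqI[rotated])
  qed
  moreover have "finite (range (\<lambda>u. rquot L u) \<times> Pow (range (\<lambda>u. rquot K u)))" using concat.IH by auto
  ultimately have f2: "finite (range (\<lambda>u. rquot (conc K L) u))"
    using finite_subset finite_imageI by metis
  show ?case using m1 m2 f1 f2 by blast
qed

end


definition box :: "'a list set list \<Rightarrow> 'a list list set" where
  "box Ls = {us. length us = length Ls \<and> (\<forall>j<length Ls. us ! j \<in> Ls ! j)}"

definition BU :: "'a list set set \<Rightarrow> nat \<Rightarrow> 'a list list set \<Rightarrow> bool" where
  "BU C m S \<longleftrightarrow> (\<exists>B. finite B \<and> (\<forall>Ls\<in>B. length Ls = m \<and> set Ls \<subseteq> SF C) \<and> S = \<Union>(box ` B))"

lemma BU_empty: "BU C m {}"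
  unfolding BU_def by (rule exI[of _ "{}"]) auto

lemma BU_union: "BU C m S \<Longrightarrow> BU C m T \<Longrightarrow> BU C m (S \<union> T)"
  unfolding BU_def
proof (elim exE conjE)
  fix B1 B2 assume "finite B1" "\<forall>Ls\<in>B1. length Ls = m \<and> set Ls \<subseteq> SF C" "S = \<Union> (box ` B1)"
    "finite B2" "\<forall>Ls\<in>B2. length Ls = m \<and> set Ls \<subseteq> SF C" "T = \<Union> (box ` B2)"
  thus "\<exists>B. finite B \<and> (\<forall>Ls\<in>B. length Ls = m \<and> set Ls \<subseteq> SF C) \<and> S \<union> T = \<Union> (box ` B)"
    by (intro exI[of _ "B1 \<union> B2"]) auto
qed

lemma BU_UN: "finite I \<Longrightarrow> (\<And>i. i \<in> I \<Longrightarrow> BU C m (S i)) \<Longrightarrow> BU C m (\<Union>i\<in>I. S i)"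
  by (induction I rule: finite_induct) (auto intro: BU_empty BU_union)

lemma BU_box: "length Ls = m \<Longrightarrow> set Ls \<subseteq> SF C \<Longrightarrow> BU C m (box Ls)"
  unfolding BU_def by (intro exI[of _ "{Ls}"]) auto

lemma box_inter: "length Ls = length Ks \<Longrightarrow> box Ls \<inter> box Ks = box (map2 (\<inter>) Ls Ks)"
  by (auto simp: box_def)

lemma box_replicate_UNIV: "box (replicate m UNIV) = {us. length us = m}"
  by (auto simp: box_def)

context fixes C :: "('a::finite) list set set" assumes pv: "prevariety C"
begin

lemma BU_full: "BU C m {us. length us = m}"
proof -
  have "set (replicate m UNIV) \<subseteq> SF C" using SF_UNIV[OF pv] by (induct m) auto
  thus ?thesis using BU_box[of "replicate m UNIV" m C] by (simp add: box_replicate_UNIV)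
qed

lemma BU_inter: "BU C m S \<Longrightarrow> BU C m T \<Longrightarrow> BU C m (S \<inter> T)"
proof -
  assume "BU C m S" "BU C m T"
  then obtain B1 B2 where b1: "finite B1" "\<forall>Ls\<in>B1. length Ls = m \<and> set Ls \<subseteq> SF C" "S = \<Union> (box ` B1)"
    and b2: "finite B2" "\<forall>Ls\<in>B2. length Ls = m \<and> set Ls \<subseteq> SF C" "T = \<Union> (box ` B2)"
    unfolding BU_def by blast
  have "S \<inter> T = (\<Union>p\<in>B1 \<times> B2. box (fst p) \<inter> box (snd p))" using b1 b2 by auto
  also have "\<dots> = (\<Union>p\<in>B1 \<times> B2. box (map2 (\<inter>) (fst p) (snd p)))"
    using b1 b2 by (intro SUP_cong refl box_inter) auto
  finally have eq: "S \<inter> T = (\<Union>p\<in>B1 \<times> B2. box (map2 (\<inter>) (fst p) (snd p)))" .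
  show ?thesis unfolding eq
  proof (rule BU_UN)
    show "finite (B1 \<times> B2)" using b1 b2 by auto
  next
    fix p assume p: "p \<in> B1 \<times> B2"
    show "BU C m (box (map2 (\<inter>) (fst p) (snd p)))"
    proof (rule BU_box)
      show "length (map2 (\<inter>) (fst p) (snd p)) = m" using p b1 b2 by auto
      show "set (map2 (\<inter>) (fst p) (snd p)) \<subseteq> SF C"
      proof
        fix X assume "X \<in> set (map2 (\<inter>) (fst p) (snd p))"
        then obtain A B where "(A, B) \<in> set (zip (fst p) (snd p))" "X = A \<inter> B" by auto
        hence "A \<in> set (fst p)" "B \<in> set (snd p)" by (auto dest: set_zip_leftD set_zip_rightD)
        thus "X \<in> SF C" using p b1 b2 \<open>X = A \<inter> B\<close> by (auto intro!: SF_inter[OF pv])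
      qed
    qed
  qed
qed

lemma BU_compl_box: "length Ls = m \<Longrightarrow> set Ls \<subseteq> SF C \<Longrightarrow> BU C m ({us. length us = m} - box Ls)"
proof -
  assume l: "length Ls = m" and s: "set Ls \<subseteq> SF C"
  have "{us. length us = m} - box Ls = (\<Union>j\<in>{..<m}. box ((replicate m UNIV)[j := - (Ls ! j)]))"
    using l by (auto simp: box_def nth_list_update)
  also have "BU C m \<dots>"
  proof (rule BU_UN)
    fix j assume "j \<in> {..<m}"
    hence "- (Ls ! j) \<in> SF C" using l s by (auto intro!: SF.compl)
    thus "BU C m (box ((replicate m UNIV)[j := - (Ls ! j)]))"
      using SF_UNIV[OF pv] by (intro BU_box) (auto dest!: set_update_subset_insert[THEN subsetD])
  qed auto
  finally show ?thesis .
qed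

lemma BU_compl: "BU C m S \<Longrightarrow> BU C m ({us. length us = m} - S)"
proof -
  assume "BU C m S"
  then obtain B where b: "finite B" "\<forall>Ls\<in>B. length Ls = m \<and> set Ls \<subseteq> SF C" "S = \<Union> (box ` B)"
    unfolding BU_def by blast
  have "BU C m ({us. length us = m} - \<Union> (box ` B))" using b(1,2)
  proof (induction B rule: finite_induct)
    case empty thus ?case using BU_full by simp
  next
    case (insert Ls B)
    have "{us. length us = m} - \<Union> (box ` insert Ls B) = ({us. length us = m} - box Ls) \<inter> ({us. length us = m} - \<Union> (box ` B))"
      by auto
    thus ?case using insert by (auto intro!: BU_inter BU_compl_box)
  qed
  thus ?thesis using b by simp
qed

lemma BU_cons: "P \<in> SF C \<Longrightarrow> BU C m S \<Longrightarrow> BU C (Suc m) {v # vs | v vs. v \<in> P \<and> vs \<in> S}"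
proof -
  assume P: "P \<in> SF C" and "BU C m S"
  then obtain B where b: "finite B" "\<forall>Ls\<in>B. length Ls = m \<and> set Ls \<subseteq> SF C" "S = \<Union> (box ` B)"
    unfolding BU_def by blast
  have "{v # vs | v vs. v \<in> P \<and> vs \<in> S} = (\<Union>Ls\<in>B. box (P # Ls))"
  proof (intro set_eqI iffI)
    fix us assume "us \<in> {v # vs | v vs. v \<in> P \<and> vs \<in> S}"
    then obtain v vs Ls where "us = v # vs" "v \<in> P" "Ls \<in> B" "vs \<in> box Ls" using b by auto
    thus "us \<in> (\<Union>Ls\<in>B. box (P # Ls))"
      by (auto simp: box_def nth_Cons split: nat.splits)
  next
    fix us assume "us \<in> (\<Union>Ls\<in>B. box (P # Ls))"
    then obtain Ls where "Ls \<in> B" "us \<in> box (P # Ls)" by auto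
    then obtain v vs where "us = v # vs" "v \<in> P" "vs \<in> box Ls"
      by (cases us) (force simp: box_def)+
    thus "us \<in> {v # vs | v vs. v \<in> P \<and> vs \<in> S}" using b \<open>Ls \<in> B\<close> by auto
  qed
  also have "BU C (Suc m) \<dots>"
    using b P by (intro BU_UN BU_box) auto
  finally show ?thesis .
qed

end


context fixes C :: "('a::finite) list set set" assumes pv: "prevariety C"
begin

lemma SF_split: "L \<in> SF C \<Longrightarrow> \<exists>PS. finite PS \<and> (\<forall>(P,K)\<in>PS. P \<in> SF C \<and> K \<in> SF C) \<and>
    (\<forall>v z. v @ z \<in> L \<longleftrightarrow> (\<exists>(P,K)\<in>PS. v \<in> P \<and> z \<in> K))"
proof -
  assume L: "L \<in> SF C"
  note q = SF_quot[OF pv L]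
  define cls where "cls K = {v. lquot v L = K}" for K
  have cls_eq: "cls K = \<Inter> ((\<lambda>z. if z \<in> K then rquot L z else - rquot L z) ` UNIV)" for K
  proof (rule set_eqI)
    fix v
    have "v \<in> cls K \<longleftrightarrow> (\<forall>z. v @ z \<in> L \<longleftrightarrow> z \<in> K)" by (simp add: cls_def lquot_def set_eq_iff)
    also have "\<dots> \<longleftrightarrow> (\<forall>z. v \<in> (if z \<in> K then rquot L z else - rquot L z))"
      by (simp add: rquot_def) blast
    finally show "v \<in> cls K \<longleftrightarrow> v \<in> \<Inter> ((\<lambda>z. if z \<in> K then rquot L z else - rquot L z) ` UNIV)"
      by (simp only: INT_iff ball_UNIV)
  qed
  have cls_SF: "cls K \<in> SF C" for K
  proof -
    have sub: "(\<lambda>z. if z \<in> K then rquot L z else - rquot L z) ` UNIV \<subseteq> range (rquot L) \<union> uminus ` range (rquot L)"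
      by auto
    have "finite (range (rquot L) \<union> uminus ` range (rquot L))" using q by auto
    hence fin: "finite ((\<lambda>z. if z \<in> K then rquot L z else - rquot L z) ` UNIV)" using sub finite_subset by blast
    have "(\<lambda>z. if z \<in> K then rquot L z else - rquot L z) ` UNIV \<subseteq> SF C" using q by (auto intro: SF.compl)
    thus ?thesis unfolding cls_eq using fin by (intro SF_Inter[OF pv])
  qed
  define PS where "PS = (\<lambda>K. (cls K, K)) ` range (\<lambda>u. lquot u L)"
  have "finite PS" unfolding PS_def using q by auto
  moreover have "\<forall>(P,K)\<in>PS. P \<in> SF C \<and> K \<in> SF C" unfolding PS_def using q cls_SF by auto
  moreover have "\<forall>v z. v @ z \<in> L \<longleftrightarrow> (\<exists>(P,K)\<in>PS. v \<in> P \<and> z \<in> K)"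
  proof (intro allI iffI)
    fix v z assume "v @ z \<in> L"
    hence "v \<in> cls (lquot v L)" "z \<in> lquot v L" "(cls (lquot v L), lquot v L) \<in> PS"
      by (auto simp: cls_def lquot_def PS_def)
    thus "\<exists>(P,K)\<in>PS. v \<in> P \<and> z \<in> K" by blast
  next
    fix v z assume "\<exists>(P,K)\<in>PS. v \<in> P \<and> z \<in> K"
    then obtain K where "v \<in> cls K" "z \<in> K" unfolding PS_def by blast
    thus "v @ z \<in> L" by (auto simp: cls_def lquot_def)
  qed
  ultimately show ?thesis by blast
qed

end

fun build :: "'a list list \<Rightarrow> 'a list \<Rightarrow> 'a list" where
  "build [] bs = []"
| "build [u] bs = u"
| "build (u # v # us) bs = u @ hd bs # build (v # us) (tl bs)"

lemma build_Cons: "us \<noteq> [] \<Longrightarrow> build (u # us) (b # bs) = u @ b # build us bs"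
  by (cases us) auto

lemma build_Cons_app: "build ((v @ w) # us) bs = v @ build (w # us) bs"
  by (cases us) auto

definition pos :: "'a list list \<Rightarrow> nat \<Rightarrow> nat" where
  "pos us k = sum_list (map (\<lambda>u. Suc (length u)) (take k us))"

lemma pos_0[simp]: "pos us 0 = 0" by (simp add: pos_def)
lemma pos_Nil[simp]: "pos [] k = 0" by (simp add: pos_def)
lemma pos_Cons_Suc[simp]: "pos (u # us) (Suc k) = Suc (length u) + pos us k" by (simp add: pos_def)

lemma pos_ge: "length us \<le> k \<Longrightarrow> pos us k = pos us (length us)"
  by (simp add: pos_def)

lemma pos_min: "pos us (min k (length us)) = pos us k"
  by (simp add: pos_def min_def)

lemma length_build: "length us = Suc (length bs) \<Longrightarrow> Suc (length (build us bs)) = pos us (length us)"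
proof (induction us bs rule: build.induct)
  case (3 u v us bs) thus ?case by (cases bs) auto
qed auto

lemma pos_Suc: "k < length us \<Longrightarrow> pos us (Suc k) = pos us k + Suc (length (us ! k))"
  by (simp add: pos_def take_Suc_conv_app_nth)

lemma pos_mono_strict: "i < j \<Longrightarrow> j \<le> length us \<Longrightarrow> pos us i < pos us j"
proof (induction j)
  case (Suc j) thus ?case using pos_Suc[of j us] by (cases "i = j") auto
qed auto

lemma pos_inj: "i \<le> length us \<Longrightarrow> j \<le> length us \<Longrightarrow> pos us i = pos us j \<longleftrightarrow> i = j"
  using pos_mono_strict[of i j us] pos_mono_strict[of j i us] by (cases i j rule: linorder_cases) auto

lemma pos_add: "pos us (i + k) = pos us i + pos (drop i us) k"
  by (simp add: pos_def take_add)

lemma pos_mono: "i \<le> j \<Longrightarrow> pos us i \<le> pos us j"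
  using pos_add[of us i "j - i"] by simp


lemma build_nth_pos: "length us = Suc (length bs) \<Longrightarrow> 0 < i \<Longrightarrow> i < length us \<Longrightarrow>
  build us bs ! (pos us i - 1) = bs ! (i - 1)"
proof (induction us arbitrary: bs i)
  case Nil thus ?case by simp
next
  case (Cons u us)
  then obtain b bs' where bs: "bs = b # bs'" by (cases bs) auto
  have ne: "us \<noteq> []" using Cons.prems by auto
  show ?case
  proof (cases "i = 1")
    case True thus ?thesis using ne by (simp add: bs build_Cons)
  next
    case False
    then obtain i' where i: "i = Suc i'" "0 < i'" using Cons.prems by (cases i) auto
    have "pos us i' \<ge> 1" using pos_mono_strict[of 0 i' us] i Cons.prems by auto
    hence "pos (u # us) i - 1 = length u + Suc (pos us i' - 1)" using i by simp
    thus ?thesis using Cons.IH[of bs' i'] Cons.prems i ne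
      by (simp add: bs build_Cons nth_append)
  qed
qed

lemma build_drop_pos: "length us = Suc (length bs) \<Longrightarrow> i < length us \<Longrightarrow>
  drop (pos us i) (build us bs) = build (drop i us) (drop i bs)"
proof (induction us arbitrary: bs i)
  case Nil thus ?case by simp
next
  case (Cons u us)
  show ?case
  proof (cases i)
    case 0 thus ?thesis by simp
  next
    case (Suc i')
    then obtain b bs' where bs: "bs = b # bs'" using Cons.prems by (cases bs) auto
    have ne: "us \<noteq> []" using Cons.prems Suc by auto
    show ?thesis using Cons.IH[of bs' i'] Cons.prems Suc ne by (simp add: bs build_Cons)
  qed
qed

lemma build_take_pos: "length vs = Suc (length cs) \<Longrightarrow> 0 < k \<Longrightarrow> k \<le> length vs \<Longrightarrow>
  take (pos vs k - 1) (build vs cs) = build (take k vs) (take (k - 1) cs)"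
proof (induction vs arbitrary: cs k)
  case Nil thus ?case by simp
next
  case (Cons v vs)
  then obtain k' where k: "k = Suc k'" by (cases k) auto
  show ?case
  proof (cases "k' = 0")
    case True
    thus ?thesis using k Cons.prems by (cases vs; cases cs) (auto simp: build_Cons)
  next
    case False
    have ne: "vs \<noteq> []" using Cons.prems k False by auto
    then obtain c cs' where cs: "cs = c # cs'" using Cons.prems by (cases cs) auto
    have "pos vs k' \<ge> 1" using pos_mono_strict[of 0 k' vs] k False Cons.prems by auto
    hence "pos (v # vs) k - 1 = length v + Suc (pos vs k' - 1)" using k by simp
    moreover have "take k' vs \<noteq> []" using False ne by simp
    moreover have "k' - 1 + 1 = k'" using False by simp
    ultimately show ?thesis using Cons.IH[of cs' k'] Cons.prems k False ne
      by (simp add: cs build_Cons take_Cons')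
  qed
qed

lemma infix_build: "length us = Suc (length bs) \<Longrightarrow> i < j \<Longrightarrow> j \<le> length us \<Longrightarrow>
  infix_between (build us bs) (pos us i) (pos us j) = build (take (j - i) (drop i us)) (take (j - i - 1) (drop i bs))"
proof -
  assume l: "length us = Suc (length bs)" and ij: "i < j" "j \<le> length us"
  have pj: "pos us j = pos us i + pos (drop i us) (j - i)" using pos_add[of us i "j - i"] ij by simp
  have "infix_between (build us bs) (pos us i) (pos us j) = take (pos (drop i us) (j - i) - 1) (build (drop i us) (drop i bs))"
    unfolding infix_between_def pj using build_drop_pos[OF l, of i] ij by simp
  also have "\<dots> = build (take (j - i) (drop i us)) (take (j - i - 1) (drop i bs))"
    using ij l by (intro build_take_pos) auto
  finally show ?thesis .
qed

definition ins2 :: "nat \<Rightarrow> 'a list \<Rightarrow> 'a list \<Rightarrow> 'a list list \<Rightarrow> 'a list list" where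
  "ins2 k v w us = take k us @ v # w # drop (Suc k) us"

lemma ins2_0[simp]: "ins2 0 v w (u # us) = v # w # us" by (simp add: ins2_def)
lemma ins2_Suc[simp]: "ins2 (Suc k) v w (u # us) = u # ins2 k v w us" by (simp add: ins2_def)
lemma ins2_ne[simp]: "ins2 k v w us \<noteq> []" by (simp add: ins2_def)
lemma length_ins2: "k < length us \<Longrightarrow> length (ins2 k v w us) = Suc (length us)" by (simp add: ins2_def)

lemma build_ins2: "k < length us \<Longrightarrow> length us = Suc (length bs) \<Longrightarrow> us ! k = v @ c # w \<Longrightarrow>
  build (ins2 k v w us) (take k bs @ c # drop k bs) = build us bs"
proof (induction k arbitrary: us bs)
  case 0
  then obtain u us' where us: "us = u # us'" by (cases us) auto
  have "build ((v @ [c] @ w) # us') bs = v @ c # build (w # us') bs"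
    by (simp only: build_Cons_app) simp
  thus ?case using 0 us by (simp add: build_Cons)
next
  case (Suc k)
  then obtain u us' where us: "us = u # us'" by (cases us) auto
  then obtain b bs' where bs: "bs = b # bs'" using Suc.prems by (cases bs) auto
  have ne: "us' \<noteq> []" using Suc.prems us by auto
  show ?case using Suc.IH[of us' bs'] Suc.prems ne by (simp add: us bs build_Cons)
qed

lemma pos_ins2_le: "j \<le> k \<Longrightarrow> k < length us \<Longrightarrow> pos (ins2 k v w us) j = pos us j"
proof (induction k arbitrary: us j)
  case 0 thus ?case by simp
next
  case (Suc k)
  then obtain u us' where us: "us = u # us'" by (cases us) auto
  show ?case using Suc.IH[of "j - 1" us'] Suc.prems by (cases j) (auto simp: us)
qed

lemma pos_ins2_gt: "k < j \<Longrightarrow> k < length us \<Longrightarrow> us ! k = v @ c # w \<Longrightarrow> pos (ins2 k v w us) (Suc j) = pos us j"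
proof (induction k arbitrary: us j)
  case 0
  then obtain u us' where us: "us = u # us'" by (cases us) auto
  obtain j' where j: "j = Suc j'" using 0 by (cases j) auto
  show ?case using 0 by (simp add: us j)
next
  case (Suc k)
  then obtain u us' where us: "us = u # us'" by (cases us) auto
  obtain j' where j: "j = Suc j'" using Suc by (cases j) auto
  show ?case using Suc.IH[of j' us'] Suc.prems by (simp add: us j)
qed

lemma pos_ins2_new: "k < length us \<Longrightarrow> pos (ins2 k v w us) (Suc k) = pos us k + Suc (length v)"
proof (induction k arbitrary: us)
  case 0 thus ?case by (cases us) auto
next
  case (Suc k)
  then obtain u us' where us: "us = u # us'" by (cases us) auto
  show ?case using Suc.IH[of us'] Suc.prems by (simp add: us)
qed


lemma nth_ins2: "k < length us \<Longrightarrow> j < Suc (length us) \<Longrightarrow> ins2 k v w us ! j =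
  (if j < k then us ! j else if j = k then v else if j = Suc k then w else us ! (j - 1))"
  apply (auto simp: ins2_def nth_append nth_Cons' min_def)
  apply (subgoal_tac "Suc (j - 2) = j - Suc 0")
   apply simp
  apply arith
  done

lemma nth_merge: "Suc k < length Ls \<Longrightarrow> (take k Ls @ X # drop (Suc (Suc k)) Ls) ! j =
  (if j < k then Ls ! j else if j = k then X else Ls ! Suc j)"
  by (auto simp: nth_append nth_Cons' min_def)

lemma box_embed: "length Ls = k \<Longrightarrow> a + k \<le> m \<Longrightarrow>
  {us. length us = m \<and> take k (drop a us) \<in> box Ls} = box (replicate a UNIV @ Ls @ replicate (m - a - k) UNIV)"
proof (intro set_eqI iffI)
  fix us assume l: "length Ls = k" "a + k \<le> m" and us: "us \<in> {us. length us = m \<and> take k (drop a us) \<in> box Ls}"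
  show "us \<in> box (replicate a UNIV @ Ls @ replicate (m - a - k) UNIV)"
    unfolding box_def
  proof (intro CollectI conjI allI impI)
    show "length us = length (replicate a UNIV @ Ls @ replicate (m - a - k) UNIV)" using l us by simp
    fix j assume j: "j < length (replicate a UNIV @ Ls @ replicate (m - a - k) UNIV)"
    show "us ! j \<in> (replicate a UNIV @ Ls @ replicate (m - a - k) UNIV) ! j"
    proof (cases "a \<le> j \<and> j < a + k")
      case True
      have A: "a \<le> length us" using us l by simp
      have all: "\<forall>i<k. drop a us ! i \<in> Ls ! i" using us l A by (simp add: box_def)
      have "j - a < k" using True l by arith
      hence "drop a us ! (j - a) \<in> Ls ! (j - a)" using all by blast
      hence "us ! (a + (j - a)) \<in> Ls ! (j - a)" using True l us by (simp add: nth_drop)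
      thus ?thesis using True l us \<open>j - a < k\<close> by (simp add: nth_append)
    next
      case False thus ?thesis using l j by (auto simp: nth_append)
    qed
  qed
next
  fix us assume l: "length Ls = k" "a + k \<le> m" and us: "us \<in> box (replicate a UNIV @ Ls @ replicate (m - a - k) UNIV)"
  have len: "length us = m" using us l by (simp add: box_def)
  have "take k (drop a us) ! j \<in> Ls ! j" if "j < k" for j
  proof -
    have "us ! (a + j) \<in> (replicate a UNIV @ Ls @ replicate (m - a - k) UNIV) ! (a + j)"
      using us that l by (auto simp: box_def)
    thus ?thesis using that l len by (simp add: nth_append)
  qed
  thus "us \<in> {us. length us = m \<and> take k (drop a us) \<in> box Ls}" using len l by (auto simp: box_def)
qed

context fixes C :: "('a::finite) list set set" assumes pv: "prevariety C"
begin

lemma BU_embed: "BU C k S \<Longrightarrow> a + k \<le> m \<Longrightarrow> BU C m {us. length us = m \<and> take k (drop a us) \<in> S}"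
proof -
  assume "BU C k S" and akm: "a + k \<le> m"
  then obtain B where b: "finite B" "\<forall>Ls\<in>B. length Ls = k \<and> set Ls \<subseteq> SF C" "S = \<Union> (box ` B)"
    unfolding BU_def by blast
  have "{us. length us = m \<and> take k (drop a us) \<in> S} = (\<Union>Ls\<in>B. {us. length us = m \<and> take k (drop a us) \<in> box Ls})"
    using b by auto
  also have "\<dots> = (\<Union>Ls\<in>B. box (replicate a UNIV @ Ls @ replicate (m - a - k) UNIV))"
    using b akm by (intro SUP_cong refl box_embed) auto
  also have "BU C m \<dots>"
  proof (rule BU_UN[OF b(1)])
    fix Ls assume "Ls \<in> B"
    moreover have "set (replicate n UNIV) \<subseteq> SF C" for n using SF_UNIV[OF pv] by (induct n) auto
    ultimately show "BU C m (box (replicate a UNIV @ Ls @ replicate (m - a - k) UNIV))"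
      using b akm by (intro BU_box) auto
  qed
  finally show ?thesis .
qed

lemma BU_build: "L \<in> SF C \<Longrightarrow> BU C (Suc (length bs)) {vs. length vs = Suc (length bs) \<and> build vs bs \<in> L}"
proof (induction bs arbitrary: L)
  case Nil
  have "{vs. length vs = Suc (length []) \<and> build vs [] \<in> L} = box [L]"
  proof (intro set_eqI iffI)
    fix vs :: "'a list list" assume "vs \<in> {vs. length vs = Suc (length []) \<and> build vs [] \<in> L}"
    thus "vs \<in> box [L]" by (cases vs) (auto simp: box_def)
  next
    fix vs :: "'a list list" assume "vs \<in> box [L]"
    thus "vs \<in> {vs. length vs = Suc (length []) \<and> build vs [] \<in> L}"
      by (cases vs) (auto simp: box_def)
  qed
  thus ?case using Nil by (auto intro: BU_box)
next
  case (Cons b bs)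
  obtain PS where ps: "finite PS" "\<forall>(P,K)\<in>PS. P \<in> SF C \<and> K \<in> SF C"
    "\<forall>v z. v @ z \<in> L \<longleftrightarrow> (\<exists>(P,K)\<in>PS. v \<in> P \<and> z \<in> K)"
    using SF_split[OF pv Cons.prems] by blast
  let ?S = "\<lambda>K. {vs. length vs = Suc (length bs) \<and> build vs bs \<in> lquot [b] K}"
  have "{vs. length vs = Suc (length (b # bs)) \<and> build vs (b # bs) \<in> L} =
     (\<Union>p\<in>PS. {v # vs | v vs. v \<in> fst p \<and> vs \<in> ?S (snd p)})"
  proof (intro set_eqI iffI)
    fix us assume "us \<in> {vs. length vs = Suc (length (b # bs)) \<and> build vs (b # bs) \<in> L}"
    hence us0: "length us = Suc (Suc (length bs))" "build us (b # bs) \<in> L" by auto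
    then obtain v vs where us: "us = v # vs" by (cases us) auto
    have "length vs = Suc (length bs)" using us0 us by auto
    moreover hence "vs \<noteq> []" by auto
    moreover hence "v @ (b # build vs bs) \<in> L" using us0 us by (simp add: build_Cons)
    ultimately have us: "us = v # vs" "length vs = Suc (length bs)" "v @ (b # build vs bs) \<in> L" using us by auto
    then obtain P K where "(P,K) \<in> PS" "v \<in> P" "b # build vs bs \<in> K" using ps(3) by blast
    thus "us \<in> (\<Union>p\<in>PS. {v # vs | v vs. v \<in> fst p \<and> vs \<in> ?S (snd p)})"
      using us by (force simp: lquot_def)
  next
    fix us assume "us \<in> (\<Union>p\<in>PS. {v # vs | v vs. v \<in> fst p \<and> vs \<in> ?S (snd p)})"
    then obtain P K v vs where "(P,K) \<in> PS" "us = v # vs" "v \<in> P" "vs \<in> ?S K" by auto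
    moreover hence "v @ (b # build vs bs) \<in> L" using ps(3) by (auto simp: lquot_def)
    moreover have "vs \<noteq> []" using \<open>vs \<in> ?S K\<close> by auto
    ultimately show "us \<in> {vs. length vs = Suc (length (b # bs)) \<and> build vs (b # bs) \<in> L}"
      by (auto simp: build_Cons)
  qed
  also have "BU C (Suc (length (b # bs))) \<dots>"
  proof (rule BU_UN[OF ps(1)])
    fix p assume p: "p \<in> PS"
    hence "snd p \<in> SF C" "fst p \<in> SF C" using ps(2) by auto
    hence "lquot [b] (snd p) \<in> SF C" using SF_quot[OF pv] by blast
    thus "BU C (Suc (length (b # bs))) {v # vs | v vs. v \<in> fst p \<and> vs \<in> ?S (snd p)}"
      using \<open>fst p \<in> SF C\<close> by (simp only: length_Cons) (intro BU_cons[OF pv] Cons.IH)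
  qed
  finally show ?case .
qed

end


lemma box_merge: "length Ls = Suc m \<Longrightarrow> k < m \<Longrightarrow>
  {us. length us = m \<and> (\<exists>v w. us ! k = v @ c # w \<and> ins2 k v w us \<in> box Ls)} =
  box (take k Ls @ conc (conc (Ls ! k) {[c]}) (Ls ! Suc k) # drop (Suc (Suc k)) Ls)"
proof (intro set_eqI iffI)
  fix us assume l: "length Ls = Suc m" "k < m"
    and "us \<in> {us. length us = m \<and> (\<exists>v w. us ! k = v @ c # w \<and> ins2 k v w us \<in> box Ls)}"
  then obtain v w where us: "length us = m" "us ! k = v @ c # w" "ins2 k v w us \<in> box Ls" by blast
  have bx: "\<forall>j<Suc m. ins2 k v w us ! j \<in> Ls ! j" using us l by (simp add: box_def)
  show "us \<in> box (take k Ls @ conc (conc (Ls ! k) {[c]}) (Ls ! Suc k) # drop (Suc (Suc k)) Ls)"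
    unfolding box_def
  proof (intro CollectI conjI allI impI)
    show "length us = length (take k Ls @ conc (conc (Ls ! k) {[c]}) (Ls ! Suc k) # drop (Suc (Suc k)) Ls)"
      using us l by simp
    fix j assume "j < length (take k Ls @ conc (conc (Ls ! k) {[c]}) (Ls ! Suc k) # drop (Suc (Suc k)) Ls)"
    hence j: "j < m" using l by simp
    show "us ! j \<in> (take k Ls @ conc (conc (Ls ! k) {[c]}) (Ls ! Suc k) # drop (Suc (Suc k)) Ls) ! j"
    proof (cases "j < k")
      case True
      thus ?thesis using bx[rule_format, of j] j l us by (simp add: nth_merge nth_ins2)
    next
      case False
      show ?thesis
      proof (cases "j = k")
        case True
        have vL: "v \<in> Ls ! k" and wL: "w \<in> Ls ! Suc k"
          using bx[rule_format, of k] bx[rule_format, of "Suc k"] j l us True by (simp_all add: nth_ins2)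
        have a: "v @ [c] \<in> conc (Ls ! k) {[c]}" using vL by (auto simp: conc_def)
        have "v @ c # w \<in> conc (conc (Ls ! k) {[c]}) (Ls ! Suc k)"
          by (rule concI[OF a wL]) simp
        thus ?thesis using True l us by (simp add: nth_merge)
      next
        case False
        hence "k < j" using \<open>\<not> j < k\<close> by simp
        thus ?thesis using bx[rule_format, of "Suc j"] j l us by (simp add: nth_merge nth_ins2)
      qed
    qed
  qed
next
  fix us assume l: "length Ls = Suc m" "k < m"
    and us: "us \<in> box (take k Ls @ conc (conc (Ls ! k) {[c]}) (Ls ! Suc k) # drop (Suc (Suc k)) Ls)"
  have len: "length us = m" using us l by (simp add: box_def)
  have bx: "\<forall>j<m. us ! j \<in> (take k Ls @ conc (conc (Ls ! k) {[c]}) (Ls ! Suc k) # drop (Suc (Suc k)) Ls) ! j"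
    using us l by (simp add: box_def)
  have "us ! k \<in> conc (conc (Ls ! k) {[c]}) (Ls ! Suc k)" using bx[rule_format, of k] l by (simp add: nth_merge)
  then obtain v w where vw: "us ! k = v @ c # w" "v \<in> Ls ! k" "w \<in> Ls ! Suc k"
    by (auto elim!: concE)
  have "ins2 k v w us \<in> box Ls" unfolding box_def
  proof (intro CollectI conjI allI impI)
    show "length (ins2 k v w us) = length Ls" using len l by (simp add: length_ins2)
    fix j assume "j < length Ls"
    hence j: "j < Suc m" using l by simp
    consider "j < k" | "j = k" | "j = Suc k" | "Suc k < j" by linarith
    thus "ins2 k v w us ! j \<in> Ls ! j"
    proof cases
      case 1 thus ?thesis using bx[rule_format, of j] j l len by (simp add: nth_merge nth_ins2)
    next
      case 2 thus ?thesis using vw j l len by (simp add: nth_ins2)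
    next
      case 3 thus ?thesis using vw j l len by (simp add: nth_ins2)
    next
      case 4
      hence "j - 1 < m" "\<not> j - 1 < k" "j - 1 \<noteq> k" "Suc (j - 1) = j" using j by auto
      hence "us ! (j - 1) \<in> Ls ! j" using bx[rule_format, of "j - 1"] l by (simp add: nth_merge)
      thus ?thesis using 4 j l len by (simp add: nth_ins2)
    qed
  qed
  thus "us \<in> {us. length us = m \<and> (\<exists>v w. us ! k = v @ c # w \<and> ins2 k v w us \<in> box Ls)}"
    using vw len by blast
qed


definition T :: "(nat \<Rightarrow> nat) \<Rightarrow> 'a list \<Rightarrow> 'a fo \<Rightarrow> 'a list list set" where
  "T f bs \<phi> = {us. length us = Suc (length bs) \<and> sat (build us bs) (\<lambda>y. pos us (f y)) \<phi>}"

fun idx :: "(nat \<Rightarrow> nat) \<Rightarrow> nat \<Rightarrow> fo_term \<Rightarrow> nat" where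
  "idx f m (FVar x) = min (f x) m"
| "idx f m FMin = 0"
| "idx f m FMax = m"

lemma idx_le: "idx f m t \<le> m" by (cases t) auto

lemma tval_idx: "length us = Suc (length bs) \<Longrightarrow>
  tval (build us bs) (\<lambda>y. pos us (f y)) t = pos us (idx f (length us) t)"
proof (cases t)
  case (FVar x)
  assume "length us = Suc (length bs)"
  thus ?thesis using FVar pos_min[of us "f x"] by simp
next
  case FMax
  assume "length us = Suc (length bs)"
  thus ?thesis using FMax length_build[of us bs] by simp
qed auto

lemma cover: "(i::nat) \<le> p m \<Longrightarrow> p 0 = 0 \<Longrightarrow> (\<exists>k\<le>m. i = p k) \<or> (\<exists>k<m. p k < i \<and> i < p (Suc k))"
proof (induction m)
  case 0 thus ?case by auto
next
  case (Suc m)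
  show ?case
  proof (cases "i \<le> p m")
    case True
    from Suc.IH[OF True Suc.prems(2)] show ?thesis by (auto intro: le_SucI less_SucI)
  next
    case False
    show ?thesis
    proof (cases "i = p (Suc m)")
      case True thus ?thesis by (intro disjI1 exI[of _ "Suc m"]) simp
    next
      case False2: False
      thus ?thesis using False Suc.prems by (intro disjI2 exI[of _ m]) auto
    qed
  qed
qed

context fixes C :: "('a::finite) list set set" assumes pv: "prevariety C"
begin

lemma BU_merge: "BU C (Suc m) S \<Longrightarrow> k < m \<Longrightarrow>
  BU C m {us. length us = m \<and> (\<exists>v w. us ! k = v @ c # w \<and> ins2 k v w us \<in> S)}"
proof -
  assume "BU C (Suc m) S" and km: "k < m"
  then obtain B where b: "finite B" "\<forall>Ls\<in>B. length Ls = Suc m \<and> set Ls \<subseteq> SF C" "S = \<Union> (box ` B)"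
    unfolding BU_def by blast
  have "{us. length us = m \<and> (\<exists>v w. us ! k = v @ c # w \<and> ins2 k v w us \<in> S)} =
     (\<Union>Ls\<in>B. {us. length us = m \<and> (\<exists>v w. us ! k = v @ c # w \<and> ins2 k v w us \<in> box Ls)})"
    using b by auto
  also have "\<dots> = (\<Union>Ls\<in>B. box (take k Ls @ conc (conc (Ls ! k) {[c]}) (Ls ! Suc k) # drop (Suc (Suc k)) Ls))"
    using b km by (intro SUP_cong refl box_merge) auto
  also have "BU C m \<dots>"
  proof (rule BU_UN[OF b(1)])
    fix Ls assume Ls: "Ls \<in> B"
    hence l: "length Ls = Suc m" and s: "set Ls \<subseteq> SF C" using b by auto
    have "Ls ! k \<in> SF C" "Ls ! Suc k \<in> SF C" using l s km by (auto intro!: nth_mem[THEN subsetD[OF s]])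
    hence X: "conc (conc (Ls ! k) {[c]}) (Ls ! Suc k) \<in> SF C" by (intro SF.concat SF.letter)
    have "set (take k Ls) \<subseteq> SF C" "set (drop (Suc (Suc k)) Ls) \<subseteq> SF C"
      using s by (auto dest: in_set_takeD in_set_dropD)
    thus "BU C m (box (take k Ls @ conc (conc (Ls ! k) {[c]}) (Ls ! Suc k) # drop (Suc (Suc k)) Ls))"
      using X l km by (intro BU_box) auto
  qed
  finally show ?thesis .
qed

lemma main: "preds \<phi> \<subseteq> C \<Longrightarrow> BU C (Suc (length bs)) (T f bs \<phi>)"
proof (induction \<phi> arbitrary: f bs)
  case (FEq s t)
  let ?m = "Suc (length bs)"
  have "T f bs (FEq s t) = (if idx f ?m s = idx f ?m t then {us. length us = ?m} else {})"
    by (auto simp: T_def tval_idx pos_inj idx_le)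
  thus ?case by (auto intro: BU_full[OF pv] BU_empty)
next
  case (FLabel a t)
  let ?m = "Suc (length bs)"
  let ?k = "idx f ?m t"
  have "T f bs (FLabel a t) = (if 0 < ?k \<and> ?k < ?m \<and> bs ! (?k - 1) = a then {us. length us = ?m} else {})"
  proof (intro set_eqI)
    fix us :: "'a list list"
    show "us \<in> T f bs (FLabel a t) \<longleftrightarrow> us \<in> (if 0 < ?k \<and> ?k < ?m \<and> bs ! (?k - 1) = a then {us. length us = ?m} else {})"
    proof (cases "length us = ?m")
      case False thus ?thesis by (auto simp: T_def)
    next
      case l: True
      have k: "?k \<le> length us" using idx_le l by simp
      have p1: "1 \<le> pos us ?k \<longleftrightarrow> 0 < ?k" using pos_mono_strict[of 0 ?k us] k by (cases "?k = 0") auto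
      have "Suc (length (build us bs)) = pos us (length us)" using l by (rule length_build)
      hence p2: "pos us ?k \<le> length (build us bs) \<longleftrightarrow> ?k < length us"
        using pos_mono_strict[of ?k "length us" us] k by (cases "?k = length us") auto
      have p3: "0 < ?k \<Longrightarrow> ?k < length us \<Longrightarrow> build us bs ! (pos us ?k - 1) = bs ! (?k - 1)"
        using l by (intro build_nth_pos) auto
      show ?thesis using l p1 p2 p3 by (auto simp: T_def tval_idx Let_def)
    qed
  qed
  thus ?case by (auto intro: BU_full[OF pv] BU_empty)
next
  case (FInf L s t)
  let ?m = "Suc (length bs)"
  let ?i = "idx f ?m s"
  let ?j = "idx f ?m t"
  let ?bs = "take (?j - ?i - 1) (drop ?i bs)"
  have L: "L \<in> SF C" using FInf.prems by (auto intro: SF.base)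
  show ?case
  proof (cases "?i < ?j")
    case False
    have "T f bs (FInf L s t) = {}"
    proof -
      have "\<not> pos us ?i < pos us ?j" if "length us = ?m" for us :: "'a list list"
        using False pos_mono[of ?j ?i us] by auto
      thus ?thesis by (auto simp: T_def tval_idx Let_def)
    qed
    thus ?thesis by (simp add: BU_empty)
  next
    case True
    have jm: "?j \<le> ?m" by (rule idx_le)
    have lbs: "length ?bs = ?j - ?i - 1" using True jm by auto
    have "T f bs (FInf L s t) = {us. length us = ?m \<and> take (?j - ?i) (drop ?i us) \<in> {vs. length vs = ?j - ?i \<and> build vs ?bs \<in> L}}"
    proof (intro set_eqI iffI)
      fix us assume "us \<in> T f bs (FInf L s t)"
      hence l: "length us = ?m" and "infix_between (build us bs) (pos us ?i) (pos us ?j) \<in> L"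
        by (auto simp: T_def tval_idx Let_def)
      thus "us \<in> {us. length us = ?m \<and> take (?j - ?i) (drop ?i us) \<in> {vs. length vs = ?j - ?i \<and> build vs ?bs \<in> L}}"
        using infix_build[OF _ True, of us bs] True jm lbs by auto
    next
      fix us assume "us \<in> {us. length us = ?m \<and> take (?j - ?i) (drop ?i us) \<in> {vs. length vs = ?j - ?i \<and> build vs ?bs \<in> L}}"
      hence l: "length us = ?m" and b: "build (take (?j - ?i) (drop ?i us)) ?bs \<in> L" by auto
      have "pos us ?i < pos us ?j" using pos_mono_strict[OF True, of us] jm l by simp
      thus "us \<in> T f bs (FInf L s t)"
        using infix_build[OF _ True, of us bs] b l jm by (auto simp: T_def tval_idx Let_def)
    qed
    also have "BU C ?m \<dots>"
    proof -
      have emb: "BU C ?m {us. length us = ?m \<and> take k (drop ?i us) \<in> {vs. length vs = k \<and> build vs ?bs \<in> L}}"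
        if "k = Suc (length ?bs)" for k
        unfolding that by (rule BU_embed[OF pv BU_build[OF pv L]]) (use True jm lbs in arith)
      have kk: "?j - ?i = Suc (length ?bs)" using True lbs by simp
      show ?thesis by (rule emb[OF kk])
    qed
    finally show ?thesis .
  qed
next
  case (FOr \<phi>1 \<phi>2)
  have "T f bs (FOr \<phi>1 \<phi>2) = T f bs \<phi>1 \<union> T f bs \<phi>2" by (auto simp: T_def)
  thus ?case using FOr by (auto intro: BU_union)
next
  case (FNeg \<phi>)
  have "T f bs (FNeg \<phi>) = {us. length us = Suc (length bs)} - T f bs \<phi>" by (auto simp: T_def)
  thus ?case using FNeg by (auto intro: BU_compl[OF pv])
next
  case (FEx x \<phi>)
  let ?m = "Suc (length bs)"
  define g where "g k = (\<lambda>y. if y = x then Suc k else if f y \<le> k then f y else Suc (f y))" for k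
  define bs2 where "bs2 k c = take k bs @ c # drop k bs" for k c
  define M where "M k c = {us. length us = ?m \<and> (\<exists>v w. us ! k = v @ c # w \<and> ins2 k v w us \<in> T (g k) (bs2 k c) \<phi>)}" for k c
  have H2: "(\<lambda>y. pos (ins2 k v w us) (g k y)) = (\<lambda>y. pos us (f y))(x := pos us k + Suc (length v))"
    if "k < length us" "us ! k = v @ c # w" for k v w c us
  proof
    fix y show "pos (ins2 k v w us) (g k y) = ((\<lambda>y. pos us (f y))(x := pos us k + Suc (length v))) y"
      using that pos_ins2_le[of "f y" k us v w] pos_ins2_gt[of k "f y" us v c w] pos_ins2_new[of k us v w]
      by (auto simp: g_def)
  qed
  have eq: "T f bs (FEx x \<phi>) = (\<Union>k\<in>{..?m}. T (f(x := k)) bs \<phi>) \<union> (\<Union>k\<in>{..<?m}. \<Union>c\<in>UNIV. M k c)"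
  proof (intro set_eqI iffI)
    fix us assume "us \<in> T f bs (FEx x \<phi>)"
    then obtain i where l: "length us = ?m" and i0: "i \<le> Suc (length (build us bs))"
      and s: "sat (build us bs) ((\<lambda>y. pos us (f y))(x := i)) \<phi>"
      by (auto simp: T_def)
    have i: "i \<le> pos us ?m" using i0 length_build[of us bs] l by simp
    from cover[of i "pos us" ?m, OF i pos_0]
    show "us \<in> (\<Union>k\<in>{..?m}. T (f(x := k)) bs \<phi>) \<union> (\<Union>k\<in>{..<?m}. \<Union>c\<in>UNIV. M k c)"
    proof (elim disjE exE conjE)
      fix k assume "k \<le> ?m" "i = pos us k"
      moreover have "(\<lambda>y. pos us (f y))(x := pos us k) = (\<lambda>y. pos us ((f(x := k)) y))" by auto
      ultimately show ?thesis using l s by (auto simp: T_def)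
    next
      fix k assume k: "k < ?m" "pos us k < i" "i < pos us (Suc k)"
      define r where "r = i - pos us k - 1"
      have "pos us (Suc k) = pos us k + Suc (length (us ! k))" using k l by (intro pos_Suc) auto
      hence r: "r < length (us ! k)" using k unfolding r_def by auto
      define v where "v = take r (us ! k)"
      define c where "c = us ! k ! r"
      define w where "w = drop (Suc r) (us ! k)"
      have uk: "us ! k = v @ c # w" unfolding v_def c_def w_def using r by (simp add: id_take_nth_drop)
      have lv: "length v = r" using r by (simp add: v_def)
      have ipos: "Suc (pos us k + length v) = i" using lv k unfolding r_def by auto
      have "ins2 k v w us \<in> T (g k) (bs2 k c) \<phi>"
        unfolding T_def bs2_def using s l k uk
        by (simp add: length_ins2 build_ins2 H2[OF _ uk] ipos)
      hence "us \<in> M k c" using l uk unfolding M_def by blast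
      thus ?thesis using k by blast
    qed
  next
    fix us assume "us \<in> (\<Union>k\<in>{..?m}. T (f(x := k)) bs \<phi>) \<union> (\<Union>k\<in>{..<?m}. \<Union>c\<in>UNIV. M k c)"
    thus "us \<in> T f bs (FEx x \<phi>)"
    proof (elim UnE UN_E)
      fix k assume k: "k \<in> {..?m}" and us: "us \<in> T (f(x := k)) bs \<phi>"
      have l: "length us = ?m" using us by (simp add: T_def)
      have "(\<lambda>y. pos us ((f(x := k)) y)) = (\<lambda>y. pos us (f y))(x := pos us k)" by auto
      moreover have "pos us k \<le> pos us ?m" using k by (intro pos_mono) auto
      moreover have "Suc (length (build us bs)) = pos us ?m" using length_build[of us bs] l by simp
      ultimately show ?thesis using us l by (auto simp: T_def intro!: exI[of _ "pos us k"])
    next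
      fix k c assume k: "k \<in> {..<?m}" and us: "us \<in> M k c"
      then obtain v w where l: "length us = ?m" and uk: "us ! k = v @ c # w"
        and ins: "ins2 k v w us \<in> T (g k) (bs2 k c) \<phi>" unfolding M_def by blast
      have s: "sat (build us bs) ((\<lambda>y. pos us (f y))(x := pos us k + Suc (length v))) \<phi>"
        using ins k l uk unfolding T_def bs2_def by (simp add: build_ins2 H2[OF _ uk])
      have "pos us (Suc k) = pos us k + Suc (length (us ! k))" using k l by (intro pos_Suc) auto
      moreover have "pos us (Suc k) \<le> pos us ?m" using k by (intro pos_mono) auto
      ultimately have "pos us k + Suc (length v) \<le> pos us ?m" using uk by simp
      moreover have "Suc (length (build us bs)) = pos us ?m" using length_build[of us bs] l by simp
      ultimately show ?thesis using s l by (auto simp: T_def intro!: exI[of _ "pos us k + Suc (length v)"])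
    qed
  qed
  have "BU C ?m (T (f(x := k)) bs \<phi>)" for k using FEx by simp
  moreover have "BU C ?m (M k c)" if "k < ?m" for k c
  proof -
    have "length (bs2 k c) = ?m" using that by (simp add: bs2_def)
    hence "BU C (Suc ?m) (T (g k) (bs2 k c) \<phi>)" using FEx.IH[where f="g k" and bs="bs2 k c"] FEx.prems by simp
    thus ?thesis unfolding M_def using that by (rule BU_merge)
  qed
  ultimately show ?case unfolding eq
    by (intro BU_union BU_UN) auto
qed

lemma FO_sub_SF: "FO_I C \<subseteq> SF C"
proof
  fix L assume "L \<in> FO_I C"
  then obtain \<phi> where p: "preds \<phi> \<subseteq> C" and L: "L = {w. sat w (\<lambda>_. 0) \<phi>}" unfolding FO_I_def by blast
  have "BU C 1 (T (\<lambda>_. 0) [] \<phi>)" using main[OF p, of "[]" "\<lambda>_. 0"] by simp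
  then obtain B where b: "finite B" "\<forall>Ls\<in>B. length Ls = 1 \<and> set Ls \<subseteq> SF C" "T (\<lambda>_. 0) [] \<phi> = \<Union> (box ` B)"
    unfolding BU_def by blast
  have "L = \<Union> ((\<lambda>Ls. hd Ls) ` B)"
  proof (intro set_eqI iffI)
    fix u assume "u \<in> L"
    hence "[u] \<in> T (\<lambda>_. 0) [] \<phi>" using L by (simp add: T_def)
    then obtain Ls where "Ls \<in> B" "[u] \<in> box Ls" using b by auto
    moreover from this have "length Ls = 1" using b by auto
    ultimately have "u \<in> hd Ls" by (cases Ls) (auto simp: box_def)
    thus "u \<in> \<Union> ((\<lambda>Ls. hd Ls) ` B)" using \<open>Ls \<in> B\<close> by blast
  next
    fix u assume "u \<in> \<Union> ((\<lambda>Ls. hd Ls) ` B)"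
    then obtain Ls where Ls: "Ls \<in> B" "u \<in> hd Ls" by auto
    hence "length Ls = 1" using b by auto
    hence "[u] \<in> box Ls" using Ls by (cases Ls) (auto simp: box_def)
    hence "[u] \<in> T (\<lambda>_. 0) [] \<phi>" using b Ls by auto
    thus "u \<in> L" using L by (simp add: T_def)
  qed
  moreover have "hd Ls \<in> SF C" if "Ls \<in> B" for Ls
    using b that by (cases Ls) auto
  ultimately show "L \<in> SF C" using b by (auto intro!: SF_Union[OF pv])
qed

end


definition FAnd :: "'a fo \<Rightarrow> 'a fo \<Rightarrow> 'a fo" where "FAnd a b = FNeg (FOr (FNeg a) (FNeg b))"
definition FLt :: "fo_term \<Rightarrow> fo_term \<Rightarrow> 'a fo" where "FLt s t = FInf UNIV s t"
definition FLe :: "fo_term \<Rightarrow> fo_term \<Rightarrow> 'a fo" where "FLe s t = FOr (FEq s t) (FLt s t)"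

lemma sat_FAnd[simp]: "sat w \<sigma> (FAnd a b) \<longleftrightarrow> sat w \<sigma> a \<and> sat w \<sigma> b" by (simp add: FAnd_def)
lemma sat_FLt[simp]: "sat w \<sigma> (FLt s t) \<longleftrightarrow> tval w \<sigma> s < tval w \<sigma> t" by (simp add: FLt_def Let_def)
lemma sat_FLe[simp]: "sat w \<sigma> (FLe s t) \<longleftrightarrow> tval w \<sigma> s \<le> tval w \<sigma> t" by (auto simp: FLe_def)
lemma fv_FAnd[simp]: "free_vars (FAnd a b) = free_vars a \<union> free_vars b" by (simp add: FAnd_def)
lemma fv_FLt[simp]: "free_vars (FLt s t :: 'a fo) = tvars s \<union> tvars t" by (simp add: FLt_def)
lemma fv_FLe[simp]: "free_vars (FLe s t :: 'a fo) = tvars s \<union> tvars t" by (simp add: FLe_def)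
lemma preds_FAnd[simp]: "preds (FAnd a b) = preds a \<union> preds b" by (simp add: FAnd_def)
lemma preds_FLt[simp]: "preds (FLt s t :: 'a fo) = {UNIV}" by (simp add: FLt_def)
lemma preds_FLe[simp]: "preds (FLe s t :: 'a fo) = {UNIV}" by (simp add: FLe_def)

lemma tval_cong: "(\<forall>y\<in>tvars t. \<sigma> y = \<sigma>' y) \<Longrightarrow> tval w \<sigma> t = tval w \<sigma>' t"
  by (cases t) auto

lemma sat_free: "(\<forall>y\<in>free_vars \<phi>. \<sigma> y = \<sigma>' y) \<Longrightarrow> sat w \<sigma> \<phi> = sat w \<sigma>' \<phi>"
proof (induction \<phi> arbitrary: \<sigma> \<sigma>')
  case (FEq s t) thus ?case using tval_cong[of s \<sigma> \<sigma>' w] tval_cong[of t \<sigma> \<sigma>' w] by simp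
next
  case (FLabel a t) thus ?case using tval_cong[of t \<sigma> \<sigma>' w] by simp
next
  case (FInf L s t) thus ?case using tval_cong[of s \<sigma> \<sigma>' w] tval_cong[of t \<sigma> \<sigma>' w] by simp
next
  case (FOr \<phi>1 \<phi>2)
  have "sat w \<sigma> \<phi>1 = sat w \<sigma>' \<phi>1" by (rule FOr.IH(1)) (use FOr.prems in auto)
  moreover have "sat w \<sigma> \<phi>2 = sat w \<sigma>' \<phi>2" by (rule FOr.IH(2)) (use FOr.prems in auto)
  ultimately show ?case by simp
next
  case (FNeg \<phi>) thus ?case by simp
next
  case (FEx x \<phi>)
  have "sat w (\<sigma>(x := i)) \<phi> = sat w (\<sigma>'(x := i)) \<phi>" for i using FEx by (intro FEx.IH) auto
  thus ?case by simp
qed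

fun bvars :: "'a fo \<Rightarrow> nat set" where
  "bvars (FEq s t) = {}"
| "bvars (FLabel a t) = {}"
| "bvars (FInf L s t) = {}"
| "bvars (FOr \<phi> \<psi>) = bvars \<phi> \<union> bvars \<psi>"
| "bvars (FNeg \<phi>) = bvars \<phi>"
| "bvars (FEx x \<phi>) = insert x (bvars \<phi>)"

lemma finite_bvars: "finite (bvars \<phi>)" by (induction \<phi>) auto

fun rt :: "fo_term \<Rightarrow> fo_term \<Rightarrow> fo_term \<Rightarrow> fo_term" where
  "rt l r (FVar x) = FVar x"
| "rt l r FMin = l"
| "rt l r FMax = r"

fun rel :: "fo_term \<Rightarrow> fo_term \<Rightarrow> 'a fo \<Rightarrow> 'a fo" where
  "rel l r (FEq s t) = FEq (rt l r s) (rt l r t)"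
| "rel l r (FLabel a t) = FAnd (FLabel a (rt l r t)) (FAnd (FNeg (FEq (rt l r t) l)) (FNeg (FEq (rt l r t) r)))"
| "rel l r (FInf L s t) = FInf L (rt l r s) (rt l r t)"
| "rel l r (FOr \<phi> \<psi>) = FOr (rel l r \<phi>) (rel l r \<psi>)"
| "rel l r (FNeg \<phi>) = FNeg (rel l r \<phi>)"
| "rel l r (FEx y \<phi>) = FEx y (FAnd (FAnd (FLe l (FVar y)) (FLe (FVar y) r)) (rel l r \<phi>))"

lemma preds_rel: "preds (rel l r \<phi>) \<subseteq> insert UNIV (preds \<phi>)"
  by (induction \<phi>) auto

lemma tvars_rt: "tvars (rt l r t) \<subseteq> tvars t \<union> tvars l \<union> tvars r"
  by (cases t) auto

lemma fv_rel: "free_vars (rel l r \<phi>) \<subseteq> free_vars \<phi> \<union> tvars l \<union> tvars r"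
proof (induction \<phi>)
  case (FEq s t) thus ?case using tvars_rt[of l r s] tvars_rt[of l r t] by auto
next
  case (FLabel a t) thus ?case using tvars_rt[of l r t] by auto
next
  case (FInf L s t) thus ?case using tvars_rt[of l r s] tvars_rt[of l r t] by auto
qed auto

lemma tval_rt: "tval w \<sigma> l = a \<Longrightarrow> tval w \<sigma> r = b \<Longrightarrow> b \<le> length w + 1 \<Longrightarrow> a < b \<Longrightarrow>
  (\<forall>y\<in>tvars t. a \<le> \<sigma> y \<and> \<sigma> y \<le> b) \<Longrightarrow>
  a \<le> tval w \<sigma> (rt l r t) \<and> tval w \<sigma> (rt l r t) \<le> b \<and>
  tval w \<sigma> (rt l r t) - a = tval (infix_between w a b) (\<lambda>y. \<sigma> y - a) t"
  by (cases t) (auto simp: infix_between_def)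

lemma sat_rel: "tval w \<sigma> l = a \<Longrightarrow> tval w \<sigma> r = b \<Longrightarrow> b \<le> length w + 1 \<Longrightarrow> a < b \<Longrightarrow>
  (\<forall>y\<in>free_vars \<phi>. a \<le> \<sigma> y \<and> \<sigma> y \<le> b) \<Longrightarrow> bvars \<phi> \<inter> (tvars l \<union> tvars r) = {} \<Longrightarrow>
  sat w \<sigma> (rel l r \<phi>) \<longleftrightarrow> sat (infix_between w a b) (\<lambda>y. \<sigma> y - a) \<phi>"
proof (induction \<phi> arbitrary: \<sigma>)
  case (FEq s t)
  thus ?case using tval_rt[of w \<sigma> l a r b s] tval_rt[of w \<sigma> l a r b t] by auto
next
  case (FLabel c t)
  let ?i = "tval w \<sigma> (rt l r t)"
  have i: "a \<le> ?i" "?i \<le> b" "?i - a = tval (infix_between w a b) (\<lambda>y. \<sigma> y - a) t"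
    using tval_rt[of w \<sigma> l a r b t] FLabel.prems by auto
  have lu: "length (infix_between w a b) = b - a - 1" using FLabel.prems by (auto simp: infix_between_def)
  have "sat w \<sigma> (rel l r (FLabel c t)) \<longleftrightarrow> a < ?i \<and> ?i < b \<and> w ! (?i - 1) = c"
    using i FLabel.prems by (auto simp: Let_def)
  also have "\<dots> \<longleftrightarrow> 1 \<le> ?i - a \<and> ?i - a \<le> b - a - 1 \<and> infix_between w a b ! (?i - a - 1) = c"
  proof -
    have "a < ?i \<Longrightarrow> ?i < b \<Longrightarrow> infix_between w a b ! (?i - a - 1) = w ! (?i - 1)"
      using FLabel.prems by (auto simp: infix_between_def)
    thus ?thesis using i by auto
  qed
  also have "\<dots> \<longleftrightarrow> sat (infix_between w a b) (\<lambda>y. \<sigma> y - a) (FLabel c t)"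
    using i lu by (simp add: Let_def)
  finally show ?case .
next
  case (FInf L s t)
  let ?i = "tval w \<sigma> (rt l r s)"
  let ?j = "tval w \<sigma> (rt l r t)"
  have i: "a \<le> ?i" "?i \<le> b" "?i - a = tval (infix_between w a b) (\<lambda>y. \<sigma> y - a) s"
    using tval_rt[of w \<sigma> l a r b s] FInf.prems by auto
  have j: "a \<le> ?j" "?j \<le> b" "?j - a = tval (infix_between w a b) (\<lambda>y. \<sigma> y - a) t"
    using tval_rt[of w \<sigma> l a r b t] FInf.prems by auto
  have "infix_between (infix_between w a b) (?i - a) (?j - a) = infix_between w ?i ?j" if ij: "?i < ?j"
  proof -
    have e1: "(?j - a) - (?i - a) - 1 = ?j - ?i - 1" and e2: "b - a - 1 - (?i - a) = b - ?i - 1"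
      and e3: "?i - a + a = ?i" and e4: "min (?j - ?i - 1) (b - ?i - 1) = ?j - ?i - 1"
      using i j ij by auto
    show ?thesis unfolding infix_between_def drop_take drop_drop e1 e2 e3 take_take e4 ..
  qed
  thus ?case using i j by (auto simp: Let_def)
next
  case (FOr \<phi>1 \<phi>2)
  have "sat w \<sigma> (rel l r \<phi>1) \<longleftrightarrow> sat (infix_between w a b) (\<lambda>y. \<sigma> y - a) \<phi>1"
    by (rule FOr.IH(1)) (use FOr.prems in auto)
  moreover have "sat w \<sigma> (rel l r \<phi>2) \<longleftrightarrow> sat (infix_between w a b) (\<lambda>y. \<sigma> y - a) \<phi>2"
    by (rule FOr.IH(2)) (use FOr.prems in auto)
  ultimately show ?case by simp
next
  case (FNeg \<phi>)
  have "sat w \<sigma> (rel l r \<phi>) \<longleftrightarrow> sat (infix_between w a b) (\<lambda>y. \<sigma> y - a) \<phi>"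
    by (rule FNeg.IH) (use FNeg.prems in auto)
  thus ?case by simp
next
  case (FEx y \<phi>)
  have yl: "y \<notin> tvars l" "y \<notin> tvars r" using FEx.prems(6) by auto
  have tl: "tval w (\<sigma>(y := i)) l = a" "tval w (\<sigma>(y := i)) r = b" for i
    using FEx.prems(1,2) yl tval_cong[of l "\<sigma>(y := i)" \<sigma> w] tval_cong[of r "\<sigma>(y := i)" \<sigma> w] by auto
  have IH: "sat w (\<sigma>(y := i)) (rel l r \<phi>) \<longleftrightarrow> sat (infix_between w a b) (\<lambda>z. (\<sigma>(y := i)) z - a) \<phi>"
    if "a \<le> i" "i \<le> b" for i
    using FEx.prems that by (intro FEx.IH[OF tl]) auto
  have lu: "length (infix_between w a b) + 1 = b - a" using FEx.prems by (auto simp: infix_between_def)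
  have fe: "(\<lambda>z. (\<sigma>(y := i)) z - a) = (\<lambda>z. \<sigma> z - a)(y := i - a)" for i by auto
  have "sat w \<sigma> (rel l r (FEx y \<phi>)) \<longleftrightarrow> (\<exists>i. a \<le> i \<and> i \<le> b \<and> sat w (\<sigma>(y := i)) (rel l r \<phi>))"
    using tl FEx.prems(3) by (simp; blast intro: le_trans)
  also have "\<dots> \<longleftrightarrow> (\<exists>i. a \<le> i \<and> i \<le> b \<and> sat (infix_between w a b) ((\<lambda>z. \<sigma> z - a)(y := i - a)) \<phi>)"
    using IH fe by auto
  also have "\<dots> \<longleftrightarrow> (\<exists>j \<le> length (infix_between w a b) + 1. sat (infix_between w a b) ((\<lambda>z. \<sigma> z - a)(y := j)) \<phi>)"
  proof
    assume "\<exists>i. a \<le> i \<and> i \<le> b \<and> sat (infix_between w a b) ((\<lambda>z. \<sigma> z - a)(y := i - a)) \<phi>"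
    then obtain i where "a \<le> i" "i \<le> b" "sat (infix_between w a b) ((\<lambda>z. \<sigma> z - a)(y := i - a)) \<phi>" by blast
    thus "\<exists>j \<le> length (infix_between w a b) + 1. sat (infix_between w a b) ((\<lambda>z. \<sigma> z - a)(y := j)) \<phi>"
      using lu by (intro exI[of _ "i - a"]) auto
  next
    assume "\<exists>j \<le> length (infix_between w a b) + 1. sat (infix_between w a b) ((\<lambda>z. \<sigma> z - a)(y := j)) \<phi>"
    then obtain j where "j \<le> length (infix_between w a b) + 1" "sat (infix_between w a b) ((\<lambda>z. \<sigma> z - a)(y := j)) \<phi>" by blast
    thus "\<exists>i. a \<le> i \<and> i \<le> b \<and> sat (infix_between w a b) ((\<lambda>z. \<sigma> z - a)(y := i - a)) \<phi>"
      using lu by (intro exI[of _ "j + a"]) auto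
  qed
  also have "\<dots> \<longleftrightarrow> sat (infix_between w a b) (\<lambda>z. \<sigma> z - a) (FEx y \<phi>)" by simp
  finally show ?case .
qed


lemma FO_II: "free_vars \<phi> = {} \<Longrightarrow> preds \<phi> \<subseteq> C \<Longrightarrow> L = {w. sat w (\<lambda>_. 0) \<phi>} \<Longrightarrow> L \<in> FO_I C"
  unfolding FO_I_def by blast

lemma FO_IE: "L \<in> FO_I C \<Longrightarrow> (\<And>\<phi>. free_vars \<phi> = {} \<Longrightarrow> preds \<phi> \<subseteq> C \<Longrightarrow> L = {w. sat w (\<lambda>_. 0) \<phi>} \<Longrightarrow> P) \<Longrightarrow> P"
  unfolding FO_I_def by blast

lemma letter_sem: "(\<exists>i \<le> Suc (length w). (1 \<le> i \<and> i \<le> length w \<and> w ! (i - 1) = a) \<and>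
     \<not> (\<exists>j \<le> Suc (length w). j \<noteq> 0 \<and> j \<noteq> i \<and> j \<noteq> Suc (length w))) \<longleftrightarrow> w = [a]"
proof
  assume "\<exists>i \<le> Suc (length w). (1 \<le> i \<and> i \<le> length w \<and> w ! (i - 1) = a) \<and>
     \<not> (\<exists>j \<le> Suc (length w). j \<noteq> 0 \<and> j \<noteq> i \<and> j \<noteq> Suc (length w))"
  then obtain i where i: "1 \<le> i" "i \<le> length w" "w ! (i - 1) = a"
    and no: "\<not> (\<exists>j \<le> Suc (length w). j \<noteq> 0 \<and> j \<noteq> i \<and> j \<noteq> Suc (length w))" by blast
  have "length w = 1"
  proof (rule ccontr)
    assume "length w \<noteq> 1"
    hence "length w \<ge> 2" using i by auto
    have "\<exists>j \<le> Suc (length w). j \<noteq> 0 \<and> j \<noteq> i \<and> j \<noteq> Suc (length w)"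
      by (rule exI[of _ "if i = 1 then 2 else 1"]) (use \<open>length w \<ge> 2\<close> in auto)
    thus False using no by blast
  qed
  with i show "w = [a]" by (cases w) auto
next
  assume "w = [a]"
  thus "\<exists>i \<le> Suc (length w). (1 \<le> i \<and> i \<le> length w \<and> w ! (i - 1) = a) \<and>
     \<not> (\<exists>j \<le> Suc (length w). j \<noteq> 0 \<and> j \<noteq> i \<and> j \<noteq> Suc (length w))"
    by (intro exI[of _ 1]) auto
qed

context fixes C :: "('a::finite) list set set" assumes pv: "prevariety C"
begin

lemma SF_sub_FO: "SF C \<subseteq> FO_I C"
proof
  fix L assume "L \<in> SF C"
  thus "L \<in> FO_I C"
  proof (induction rule: SF.induct)
    case (base L)
    show ?case
    proof (rule FO_II[of "FInf L FMin FMax"])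
      show "L = {w. sat w (\<lambda>_. 0) (FInf L FMin FMax)}" by (simp add: infix_between_def Let_def)
    qed (use base in auto)
  next
    case (letter a)
    let ?\<phi> = "FEx 0 (FAnd (FLabel a (FVar 0)) (FNeg (FEx 1 (FAnd (FNeg (FEq (FVar 1) FMin))
                (FAnd (FNeg (FEq (FVar 1) (FVar 0))) (FNeg (FEq (FVar 1) FMax)))))))"
    show ?case
    proof (rule FO_II[of ?\<phi>])
      show "{[a]} = {w. sat w (\<lambda>_. 0) ?\<phi>}"
        using letter_sem[of _ a] by (auto simp: Let_def)
    qed auto
  next
    case (union K L)
    from union.IH obtain \<phi> \<psi> where "free_vars \<phi> = {}" "preds \<phi> \<subseteq> C" "K = {w. sat w (\<lambda>_. 0) \<phi>}"
      "free_vars \<psi> = {}" "preds \<psi> \<subseteq> C" "L = {w. sat w (\<lambda>_. 0) \<psi>}" by (auto elim!: FO_IE)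
    thus ?case by (intro FO_II[of "FOr \<phi> \<psi>"]) auto
  next
    case (compl L)
    from compl.IH obtain \<phi> where "free_vars \<phi> = {}" "preds \<phi> \<subseteq> C" "L = {w. sat w (\<lambda>_. 0) \<phi>}"
      by (auto elim!: FO_IE)
    thus ?case by (intro FO_II[of "FNeg \<phi>"]) auto
  next
    case (concat K L)
    from concat.IH obtain \<phi> \<psi> where f: "free_vars \<phi> = {}" "preds \<phi> \<subseteq> C" "K = {w. sat w (\<lambda>_. 0) \<phi>}"
      "free_vars \<psi> = {}" "preds \<psi> \<subseteq> C" "L = {w. sat w (\<lambda>_. 0) \<psi>}" by (auto elim!: FO_IE)
    define N where "N = Suc (Max (insert 0 (bvars \<phi> \<union> bvars \<psi>)))"
    have fin: "finite (insert 0 (bvars \<phi> \<union> bvars \<psi>))" by (simp add: finite_bvars)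
    have nb: "v \<notin> bvars \<phi>" "v \<notin> bvars \<psi>" if "N \<le> v" for v
      using Max_ge[OF fin, of v] that unfolding N_def by auto
    define x where "x = N"
    define y where "y = Suc N"
    define z where "z = Suc (Suc N)"
    have xyz: "x \<noteq> y" "x \<noteq> z" "y \<noteq> z" "y \<noteq> x" "z \<noteq> x" "z \<noteq> y" unfolding x_def y_def z_def by auto
    have nb2: "x \<notin> bvars \<psi>" "y \<notin> bvars \<phi>" using nb unfolding x_def y_def by auto
    let ?rK = "rel FMin (FVar y) \<phi>"
    let ?rL = "rel (FVar x) FMax \<psi>"
    let ?\<chi> = "FEx x (FEx y (FAnd (FAnd (FLt (FVar x) (FVar y)) (FNeg (FEx z (FAnd (FLt (FVar x) (FVar z)) (FLt (FVar z) (FVar y))))))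
       (FAnd ?rK ?rL)))"
    show ?case
    proof (rule FO_II[of ?\<chi>])
      show "free_vars ?\<chi> = {}"
        using fv_rel[of FMin "FVar y" \<phi>] fv_rel[of "FVar x" FMax \<psi>] f xyz by auto
      show "preds ?\<chi> \<subseteq> C"
        using preds_rel[of FMin "FVar y" \<phi>] preds_rel[of "FVar x" FMax \<psi>] f pv
        by (auto simp: prevariety_def)
      show "conc K L = {w. sat w (\<lambda>_. 0) ?\<chi>}"
      proof (intro set_eqI)
        fix w :: "'a list"
        let ?n = "length w"
        let ?s = "\<lambda>i j. ((\<lambda>_. 0)(x := i, y := j)) :: nat \<Rightarrow> nat"
        have K: "sat w (?s i j) ?rK \<longleftrightarrow> take i w \<in> K" if "i < j" "j = Suc i" "j \<le> Suc ?n" for i j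
        proof -
          have "sat w (?s i j) ?rK \<longleftrightarrow> sat (infix_between w 0 j) (\<lambda>v. ?s i j v - 0) \<phi>"
            using that xyz nb2 f by (intro sat_rel) auto
          also have "\<dots> \<longleftrightarrow> sat (infix_between w 0 j) (\<lambda>_. 0) \<phi>" using f by (intro sat_free) auto
          also have "infix_between w 0 j = take i w" using that by (simp add: infix_between_def)
          finally show ?thesis by (simp only: f(3) f(6) mem_Collect_eq)
        qed
        have L: "sat w (?s i j) ?rL \<longleftrightarrow> drop i w \<in> L" if "i < j" "j \<le> Suc ?n" for i j
        proof -
          have "sat w (?s i j) ?rL \<longleftrightarrow> sat (infix_between w i (Suc ?n)) (\<lambda>v. ?s i j v - i) \<psi>"
            using that xyz nb2 f by (intro sat_rel) auto
          also have "\<dots> \<longleftrightarrow> sat (infix_between w i (Suc ?n)) (\<lambda>_. 0) \<psi>" using f by (intro sat_free) auto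
          also have "infix_between w i (Suc ?n) = drop i w" using that by (simp add: infix_between_def)
          finally show ?thesis by (simp only: f(3) f(6) mem_Collect_eq)
        qed
        have succ: "(\<not> (\<exists>k \<le> Suc ?n. i < k \<and> k < j)) \<longleftrightarrow> j = Suc i" if "i < j" "j \<le> Suc ?n" for i j :: nat
          using that by (auto intro: exI[of _ "Suc i"])
        have "sat w (\<lambda>_. 0) ?\<chi> \<longleftrightarrow> (\<exists>i \<le> Suc ?n. \<exists>j \<le> Suc ?n. i < j \<and> \<not> (\<exists>k \<le> Suc ?n. i < k \<and> k < j) \<and>
             sat w (?s i j) ?rK \<and> sat w (?s i j) ?rL)"
          using xyz by simp
        also have "\<dots> \<longleftrightarrow> (\<exists>i \<le> ?n. take i w \<in> K \<and> drop i w \<in> L)"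
        proof
          assume "\<exists>i \<le> Suc ?n. \<exists>j \<le> Suc ?n. i < j \<and> \<not> (\<exists>k \<le> Suc ?n. i < k \<and> k < j) \<and>
             sat w (?s i j) ?rK \<and> sat w (?s i j) ?rL"
          then obtain i j where ij: "i < j" "j \<le> Suc ?n" "\<not> (\<exists>k \<le> Suc ?n. i < k \<and> k < j)"
            "sat w (?s i j) ?rK" "sat w (?s i j) ?rL" by blast
          hence "j = Suc i" using succ by blast
          thus "\<exists>i \<le> ?n. take i w \<in> K \<and> drop i w \<in> L" using ij K L by auto
        next
          assume "\<exists>i \<le> ?n. take i w \<in> K \<and> drop i w \<in> L"
          then obtain i where i: "i \<le> ?n" "take i w \<in> K" "drop i w \<in> L" by blast
          show "\<exists>i \<le> Suc ?n. \<exists>j \<le> Suc ?n. i < j \<and> \<not> (\<exists>k \<le> Suc ?n. i < k \<and> k < j) \<and>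
             sat w (?s i j) ?rK \<and> sat w (?s i j) ?rL"
            using i K[of i "Suc i"] L[of i "Suc i"] succ[of i "Suc i"]
            by (intro exI[of _ i] conjI exI[of _ "Suc i"]) auto
        qed
        also have "\<dots> \<longleftrightarrow> w \<in> conc K L"
        proof
          assume "\<exists>i \<le> ?n. take i w \<in> K \<and> drop i w \<in> L"
          then obtain i where "take i w \<in> K" "drop i w \<in> L" by blast
          thus "w \<in> conc K L" by (intro concI[of "take i w" _ "drop i w"]) auto
        next
          assume "w \<in> conc K L"
          then obtain u v where "u \<in> K" "v \<in> L" "w = u @ v" by (auto elim: concE)
          thus "\<exists>i \<le> ?n. take i w \<in> K \<and> drop i w \<in> L" by (intro exI[of _ "length u"]) auto
        qed
        finally show "w \<in> conc K L \<longleftrightarrow> w \<in> {w. sat w (\<lambda>_. 0) ?\<chi>}" by simp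
      qed
    qed
  qed
qed

end

theorem theorem6p5:
  fixes C :: "('a::finite) list set set"
  assumes "prevariety C"
  shows "SF C = FO_I C"
  using SF_sub_FO[OF assms] FO_sub_SF[OF assms] by blast


end
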